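(* Consider the algorithm described in the context, where $\psi$ can be truncated, and suppose it does not terminate in finitely many steps. Assume: (A.1) $\psi$ is bounded from below; (B.1) there is $R>0$ with $\{x^k\}\subseteq B_R(0)$; (B.2) there is $\kappa_B>0$ with $\sup_k\|B^k\|\le\kappa_B$; (B.3) for every subsequence $\{k_\ell\}$ such that $\{x^{k_\ell}\}$ converges and $\alpha_{k_\ell}\to0$, $\psi(x^{k_\ell}+\alpha_{k_\ell}\bar s^{k_\ell})-\psi(x^{k_\ell})-\alpha_{k_\ell}\psi'(x^{k_\ell};\bar s^{k_\ell})=o(\alpha_{k_\ell})$ as $\ell\to\infty$; (B.4) for every $\epsilon>0$ there is $\epsilon'>0$ such that $\Gamma(x^k)\ge\epsilon$ implies $\Gamma(x^k,\bar s^k)\ge\epsilon'$. Then $\liminf_{k\to\infty}\|g^k\|=0$.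
   Context: Problem: minimize $\psi=f+\varphi$ where $f:\mathbb{R}^n\to\mathbb{R}$ is continuously differentiable and $\varphi:\mathbb{R}^n\to\mathbb{R}$ is convex. Notation: $\|\cdot\|$ Euclidean norm (Frobenius for matrices), $B_r(x)$ open ball, $\bar v=v/\|v\|$, $\psi'(x;d)$ directional derivative, $\partial\psi(x)=\nabla f(x)+\partial\varphi(x)$; $x$ is stationary if $0\in\partial\psi(x)$. Pseudo-gradient: $g(x)=u(x)d(x)$ where, for non-stationary $x$, $\|d(x)\|=1$, $\psi'(x;d(x))<0$, $u(x)\in[\psi'(x;d(x)),0)$, and for stationary $x$, $d(x)=0$, $u(x)=0$. Safeguards: for $\|d\|=1$, $\Gamma_{\max}(x,d)=\sup\{T>0: t\mapsto\psi(x+td)\text{ is } C^1\text{ on }(0,T)\}$, $\Gamma(x)=\inf_{\|d\|=1}\Gamma_{\max}(x,d)$; a stepsize safeguard $(x,d)\mapsto\Gamma(x,d)\in(0,\infty]$ is fixed. Truncation: $\psi$ can be truncated with data $\mathbb{R}^n=S_0\supset\cdots\supset S_m$, $\delta\in(0,\infty]$, $\kappa>0$, $T:\mathbb{R}^n\times(0,\delta]\to\mathbb{R}^n$ meaning (i) $\Gamma(x)\ge\delta$ on $S_m$; (ii) for $a\in(0,\delta]$, $x\in S_i\setminus S_{i+1}$, $i<m$: if $\Gamma(x)\ge a$ then $T(x,a)=x$, else $T(x,a)\in S_{i+1}$, $\Gamma(T(x,a))\ge a$, $\|T(x,a)-x\|\le\kappa a$. Put $S_{m+1}=\emptyset$.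 Algorithm: parameters $0<\eta<\eta_1<\eta_2<1$, $0<r_1<1<r_2$, $\Delta_{\max}>0$, $\gamma_1,\gamma_2>0$, a positive strictly decreasing summable sequence $(\epsilon_s)$ with $\epsilon_s\le\delta$, a nonincreasing $\ell:(0,\infty)\to[0,\frac12]$ with $\ell(\Delta)\to0$ as $\Delta\to0^+$; start $x^0$, $\Delta_0>0$, counters $c_0=\dots=c_m=0$. Iteration $k$: $g^k=g(x^k)$; stop if $g^k=0$. Choose $B^k\in\mathbb{R}^{n\times n}$, model $m_k(s)=\psi(x^k)+\langle g^k,s\rangle+\frac12\langle s,B^ks\rangle$, Cauchy point $s^k_C=-\alpha^C_kg^k$ with $\alpha^C_k\in\arg\min_{0\le t\le\Delta_k/\|g^k\|}m_k(-tg^k)$. Choose $s^k$, $\|s^k\|\le\Delta_k$, with $m_k(0)-m_k(s^k)\ge\frac{\gamma_1}{2}\|g^k\|\min\{\Delta_k,\gamma_2\|g^k\|\}$ and $m_k(0)-m_k(s^k)\ge(1-\ell(\|s^k\|))(m_k(0)-m_k(s^k_C))$. Let $\rho^1_k=\frac{\psi(x^k)-\psi(x^k+s^k)}{m_k(0)-m_k(s^k)}$. If $\rho^1_k\ge\eta_1$: $\tilde x^k=x^k+s^k$, $\Delta_{k+1}=\min\{\Delta_{\max},r_2\Delta_k\}$ if $\rho^1_k>\eta_2$ and $\Delta_{k+1}=\Delta_k$ otherwise. Stepsize computation (performed for the analysis in every iteration, used by the algorithm when $\rho^1_k<\eta_1$): $\alpha_k=\min\{\Gamma(x^k,\bar s^k),\|s^k\|\}$;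 if $m_k(0)-m_k(\alpha_k\bar s^k)<\frac{\alpha_k}{2\|s^k\|}(m_k(0)-m_k(s^k))$, replace $s^k$ by $s^k_C$ and $\alpha_k=\min\{\Gamma(x^k,\bar s^k_C),\|s^k_C\|\}$; $\rho^2_k=\frac{\psi(x^k)-\psi(x^k+\alpha_k\bar s^k)}{m_k(0)-m_k(\alpha_k\bar s^k)}$. If $\rho^1_k<\eta_1$: $\Delta_{k+1}=r_1\Delta_k$ if $\rho^2_k<\eta_1$, $=\min\{\Delta_{\max},r_2\Delta_k\}$ if $\rho^2_k>\eta_2$, $=\Delta_k$ otherwise; $\tilde x^k=x^k+\alpha_k\bar s^k$ if $\rho^2_k\ge\eta$ and $\tilde x^k=x^k$ otherwise. Truncation step: set $\tilde x=\tilde x^k$ and repeat {find $i$ with $\tilde x\in S_i\setminus S_{i+1}$; if $\Gamma(\tilde x)<\epsilon_{c_i}$ set $\tilde x\leftarrow T(\tilde x,\epsilon_{c_i})$, $c_i\leftarrow c_i+1$; else stop}; $x^{k+1}=\tilde x$. Here $\alpha_k,\bar s^k$ denote the quantities of the stepsize computation. *)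

theory Defs
  imports "HOL-Analysis.Analysis" "HOL-Library.Landau_Symbols"
begin

text \<open>Convex subdifferential of a convex function at x.\<close>
definition convex_subdiff :: "('a::real_inner \<Rightarrow> real) \<Rightarrow> 'a \<Rightarrow> 'a set" where
  "convex_subdiff phi x = {v. \<forall>y. phi y \<ge> phi x + v \<bullet> (y - x)}"

text \<open>x is stationary for psi = f + phi: 0 in grad f(x) + subdifferential of phi at x.\<close>
definition stationary :: "('a::real_inner \<Rightarrow> 'a) \<Rightarrow> ('a \<Rightarrow> real) \<Rightarrow> 'a \<Rightarrow> bool" where
  "stationary gradf phi x \<longleftrightarrow> 0 \<in> (\<lambda>v. gradf x + v) ` convex_subdiff phi x"

text \<open>One-sided directional derivative psi'(x;d).\<close>
definition dir_deriv :: "('a::real_normed_vector \<Rightarrow> real) \<Rightarrow> 'a \<Rightarrow> 'a \<Rightarrow> real" where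
  "dir_deriv psi x d = Lim (at_right 0) (\<lambda>t. (psi (x + t *\<^sub>R d) - psi x) / t)"

text \<open>Gamma_max(x,d) = sup{T>0 : t -> psi(x+td) is C^1 on (0,T)} (in (0,\<infinity>]).\<close>
definition Gamma_max :: "('a::real_normed_vector \<Rightarrow> real) \<Rightarrow> 'a \<Rightarrow> 'a \<Rightarrow> ereal" where
  "Gamma_max psi x d =
     (SUP T \<in> {T. T > 0 \<and> (\<lambda>t. psi (x + t *\<^sub>R d)) C1_differentiable_on {0<..<T}}. ereal T)"

text \<open>Gamma(x) = inf over unit directions of Gamma_max(x,d).\<close>
definition Gamma_pt :: "('a::real_normed_vector \<Rightarrow> real) \<Rightarrow> 'a \<Rightarrow> ereal" where
  "Gamma_pt psi x = (INF d \<in> {d. norm d = 1}. Gamma_max psi x d)"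

text \<open>Trust-region model m_k(s).\<close>
definition tr_model :: "real \<Rightarrow> real^'n \<Rightarrow> real^'n^'n \<Rightarrow> real^'n \<Rightarrow> real" where
  "tr_model psix g B s = psix + g \<bullet> s + 1/2 * (s \<bullet> (B *v s))"

text \<open>The truncation property, with S_(m+1) = {} put explicitly.\<close>
definition can_truncate ::
  "('a::real_normed_vector \<Rightarrow> ereal) \<Rightarrow> (nat \<Rightarrow> 'a set) \<Rightarrow> nat \<Rightarrow> ereal \<Rightarrow> real
    \<Rightarrow> ('a \<Rightarrow> real \<Rightarrow> 'a) \<Rightarrow> bool" where
  "can_truncate Gam S m \<delta> \<kappa> T \<longleftrightarrow>
     S 0 = UNIV \<and> (\<forall>i<m. S (Suc i) \<subseteq> S i) \<and> S (Suc m) = {} \<and>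
     0 < \<delta> \<and> 0 < \<kappa> \<and>
     (\<forall>x\<in>S m. \<delta> \<le> Gam x) \<and>
     (\<forall>a i x. 0 < a \<and> ereal a \<le> \<delta> \<and> i < m \<and> x \<in> S i - S (Suc i) \<longrightarrow>
        (if ereal a \<le> Gam x then T x a = x
         else T x a \<in> S (Suc i) \<and> ereal a \<le> Gam (T x a) \<and> norm (T x a - x) \<le> \<kappa> * a))"

text \<open>The index i with x in S_i minus S_(i+1).\<close>
definition level :: "(nat \<Rightarrow> 'a set) \<Rightarrow> nat \<Rightarrow> 'a \<Rightarrow> nat" where
  "level S m x = (SOME i. i \<le> m \<and> x \<in> S i \<and> x \<notin> S (Suc i))"

text \<open>trunc_loop ... x c x' c': the truncation loop started at point x with counters c
  terminates with point x' and counters c'.\<close>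
inductive trunc_loop ::
  "('a \<Rightarrow> ereal) \<Rightarrow> (nat \<Rightarrow> 'a set) \<Rightarrow> nat \<Rightarrow> (nat \<Rightarrow> real) \<Rightarrow> ('a \<Rightarrow> real \<Rightarrow> 'a)
    \<Rightarrow> 'a \<Rightarrow> (nat \<Rightarrow> nat) \<Rightarrow> 'a \<Rightarrow> (nat \<Rightarrow> nat) \<Rightarrow> bool"
  for Gam S m eps T where
  stop: "\<not> Gam x < ereal (eps (c (level S m x))) \<Longrightarrow> trunc_loop Gam S m eps T x c x c"
| step: "Gam x < ereal (eps (c (level S m x))) \<Longrightarrow>
         trunc_loop Gam S m eps T (T x (eps (c (level S m x))))
            (c(level S m x := Suc (c (level S m x)))) x' c' \<Longrightarrow>
         trunc_loop Gam S m eps T x c x' c'"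

end

theory Submission
  imports Defs
begin


lemma convex_lipschitz_cball:
  fixes phi :: "'a::euclidean_space \<Rightarrow> real"
  assumes cv: "convex_on UNIV phi"
  shows "\<exists>L>0. \<forall>x\<in>cball 0 r. \<forall>y\<in>cball 0 r. \<bar>phi x - phi y\<bar> \<le> L * norm (x - y)"
proof -
  have cont: "continuous_on UNIV phi" by (rule convex_on_continuous[OF open_UNIV cv])
  have "compact (phi ` cball 0 (r+1))"
    by (rule compact_continuous_image) (auto intro: continuous_on_subset[OF cont])
  then have "bounded (phi ` cball 0 (r+1))" by (rule compact_imp_bounded)
  then obtain M1 where M1: "\<forall>z\<in>cball 0 (r+1). \<bar>phi z\<bar> \<le> M1" unfolding bounded_iff by force
  define M where "M = max M1 0"
  have M: "\<And>z. z \<in> cball 0 (r+1) \<Longrightarrow> \<bar>phi z\<bar> \<le> M" using M1 by (force simp: M_def)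
  have M0: "0 \<le> M" by (simp add: M_def)
  have one: "phi y - phi x \<le> (2*M+1) * norm (x - y)"
    if x: "x \<in> cball 0 r" and y: "y \<in> cball 0 r" for x y
  proof (cases "x = y")
    case True then show ?thesis by simp
  next
    case False
    define n where "n = norm (y - x)"
    have n: "n > 0" using False by (simp add: n_def)
    define z where "z = y + (1/n) *\<^sub>R (y - x)"
    have "norm z \<le> norm y + norm ((1/n) *\<^sub>R (y - x))" unfolding z_def by (rule norm_triangle_ineq)
    also have "norm ((1/n) *\<^sub>R (y - x)) = 1" using n by (simp add: n_def)
    finally have zb: "z \<in> cball 0 (r+1)" using y by auto
    define th where "th = n / (n+1)"
    have th: "0 \<le> th" "th \<le> 1" using n by (auto simp: th_def)
    have eq: "(1 - th) *\<^sub>R x + th *\<^sub>R z = y"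
    proof -
      have "(1 - th) *\<^sub>R x + th *\<^sub>R z = (1/(n+1)) *\<^sub>R x + (n/(n+1)) *\<^sub>R y + ((n/(n+1)) * (1/n)) *\<^sub>R (y - x)"
        using n by (simp add: th_def z_def algebra_simps field_simps)
      also have "\<dots> = y" using n by (simp add: field_simps algebra_simps scaleR_add_left[symmetric]
          del: scaleR_add_left)
      finally show ?thesis .
    qed
    have "phi y \<le> (1 - th) * phi x + th * phi z"
      using convex_onD[OF cv th, of x z] eq by simp
    hence "phi y - phi x \<le> th * (phi z - phi x)" by (simp add: algebra_simps)
    also have "\<dots> \<le> th * (2*M)"
      using M[OF zb] M[of x] x th(1) by (intro mult_left_mono) auto
    also have "\<dots> \<le> n * (2*M+1)"
    proof -
      have M0: "0 \<le> M" using M[OF zb] by auto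
      have "th \<le> n" using n by (simp add: th_def field_simps)
      hence "th * (2*M) \<le> n * (2*M)" using M0 by (intro mult_right_mono) auto
      also have "\<dots> \<le> n * (2*M+1)" using n by simp
      finally show ?thesis .
    qed
    finally show ?thesis by (simp add: n_def norm_minus_commute mult.commute)
  qed
  show ?thesis
  proof (intro exI[of _ "2*M+1"] conjI ballI)
    show "0 < 2*M+1" using M0 by simp
    fix x y :: 'a assume "x \<in> cball 0 r" "y \<in> cball 0 r"
    then show "\<bar>phi x - phi y\<bar> \<le> (2*M+1) * norm (x - y)"
      using one[of x y] one[of y x] by (auto simp: norm_minus_commute abs_le_iff)
  qed
qed

lemma C1_lipschitz_cball:
  fixes f :: "'a::euclidean_space \<Rightarrow> real"
  assumes der: "\<forall>y. (f has_derivative (\<lambda>h. gradf y \<bullet> h)) (at y)" and cg: "continuous_on UNIV gradf"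
  shows "\<exists>L>0. \<forall>x\<in>cball 0 r. \<forall>y\<in>cball 0 r. \<bar>f x - f y\<bar> \<le> L * norm (x - y)"
proof -
  have "compact (gradf ` cball 0 r)"
    by (rule compact_continuous_image) (auto intro: continuous_on_subset[OF cg])
  then have "bounded (gradf ` cball 0 r)" by (rule compact_imp_bounded)
  then obtain M1 where M1: "\<forall>z\<in>cball 0 r. norm (gradf z) \<le> M1" unfolding bounded_iff by force
  define M where "M = max M1 0"
  have M: "\<And>z. z \<in> cball 0 r \<Longrightarrow> norm (gradf z) \<le> M" using M1 by (force simp: M_def)
  have M0: "0 \<le> M" by (simp add: M_def)
  show ?thesis
  proof (intro exI[of _ "M+1"] conjI ballI)
    show "0 < M + 1" using M0 by simp
    fix x y :: 'a assume x: "x \<in> cball 0 r" and y: "y \<in> cball 0 r"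
    have "norm (f x - f y) \<le> M * norm (x - y)"
    proof (rule differentiable_bound[OF convex_cball _ _ x y])
      fix z assume "z \<in> cball (0::'a) r"
      show "(f has_derivative (\<lambda>h. gradf z \<bullet> h)) (at z within cball 0 r)"
        using der has_derivative_at_withinI by blast
      show "onorm (\<lambda>h. gradf z \<bullet> h) \<le> M"
        by (rule onorm_le) (metis Cauchy_Schwarz_ineq2 M \<open>z \<in> cball 0 r\<close> mult_right_mono norm_ge_zero real_norm_def order_trans)
    qed
    also have "\<dots> \<le> (M+1) * norm (x - y)" by (simp add: mult_right_mono)
    finally show "\<bar>f x - f y\<bar> \<le> (M+1) * norm (x - y)" by simp
  qed
qed



lemma dd_tendsto:
  fixes f phi :: "'a::euclidean_space \<Rightarrow> real"
  assumes der: "\<forall>y. (f has_derivative (\<lambda>h. gradf y \<bullet> h)) (at y)" and cv: "convex_on UNIV phi"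
  shows "((\<lambda>t. ((\<lambda>y. f y + phi y) (x + t *\<^sub>R v) - (\<lambda>y. f y + phi y) x) / t)
           \<longlongrightarrow> dir_deriv (\<lambda>y. f y + phi y) x v) (at_right 0)"
proof -
  define F where "F = (\<lambda>t::real. f (x + t *\<^sub>R v))"
  have "((\<lambda>t. x + t *\<^sub>R v) has_derivative (\<lambda>t. t *\<^sub>R v)) (at 0)"
    by (auto intro!: derivative_eq_intros)
  from has_derivative_compose[OF this, of f "\<lambda>h. gradf x \<bullet> h"] der
  have "(F has_derivative (\<lambda>t. gradf x \<bullet> (t *\<^sub>R v))) (at 0)" by (simp add: F_def)
  moreover have "(\<lambda>t. gradf x \<bullet> (t *\<^sub>R v)) = (*) (gradf x \<bullet> v)" by (auto simp: algebra_simps)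
  ultimately have "(F has_field_derivative (gradf x \<bullet> v)) (at 0)"
    by (simp add: has_field_derivative_def)
  hence "((\<lambda>t. (F t - F 0) / (t - 0)) \<longlongrightarrow> gradf x \<bullet> v) (at 0)"
    using has_field_derivative_iff by blast
  hence T1: "((\<lambda>t. (f (x + t *\<^sub>R v) - f x) / t) \<longlongrightarrow> gradf x \<bullet> v) (at_right 0)"
    by (auto simp: F_def intro: tendsto_within_subset)
  define q where "q t = (phi (x + t *\<^sub>R v) - phi x) / t" for t :: real
  have mono: "q a \<le> q b" if "0 < a" "a \<le> b" for a b
  proof -
    have b0: "0 < b" using that by simp
    have eq: "(1 - a/b) *\<^sub>R x + (a/b) *\<^sub>R (x + b *\<^sub>R v) = x + a *\<^sub>R v"
      using b0 by (simp add: algebra_simps)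
    have "phi (x + a *\<^sub>R v) \<le> (1 - a/b) * phi x + (a/b) * phi (x + b *\<^sub>R v)"
      using convex_onD[OF cv, of "a/b" x "x + b *\<^sub>R v"] that b0 eq by simp
    hence "phi (x + a *\<^sub>R v) - phi x \<le> (a/b) * (phi (x + b *\<^sub>R v) - phi x)" by (simp add: algebra_simps)
    thus ?thesis using that b0 by (simp add: q_def field_simps)
  qed
  have bnd: "phi x - phi (x - v) \<le> q a" if "0 < a" for a
  proof -
    have eq: "(1 - 1/(1+a)) *\<^sub>R (x - v) + (1/(1+a)) *\<^sub>R (x + a *\<^sub>R v) = x"
    proof -
      have "(1 - 1/(1+a)) *\<^sub>R (x - v) + (1/(1+a)) *\<^sub>R (x + a *\<^sub>R v)
          = (a/(1+a)) *\<^sub>R (x - v) + (1/(1+a)) *\<^sub>R (x + a *\<^sub>R v)"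
        using that by (simp add: field_simps)
      also have "\<dots> = (a/(1+a) + 1/(1+a)) *\<^sub>R x"
        by (simp add: algebra_simps)
      also have "a/(1+a) + 1/(1+a) = 1" using that by (simp add: add_divide_distrib[symmetric])
      finally show ?thesis by simp
    qed
    have "phi x \<le> (1 - 1/(1+a)) * phi (x - v) + (1/(1+a)) * phi (x + a *\<^sub>R v)"
      using convex_onD[OF cv, of "1/(1+a)" "x - v" "x + a *\<^sub>R v"] that eq by simp
    moreover have "1 - 1/(1+a) = a/(1+a)" using that by (simp add: field_simps)
    ultimately have "phi x \<le> a/(1+a) * phi (x - v) + 1/(1+a) * phi (x + a *\<^sub>R v)" by simp
    also have "\<dots> = (a * phi (x - v) + phi (x + a *\<^sub>R v)) / (1+a)" by (simp add: add_divide_distrib)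
    finally have "phi x \<le> (a * phi (x - v) + phi (x + a *\<^sub>R v)) / (1+a)" .
    hence "(1+a) * phi x \<le> a * phi (x - v) + phi (x + a *\<^sub>R v)"
      using that by (simp add: pos_le_divide_eq mult.commute)
    hence "a * (phi x - phi (x - v)) \<le> phi (x + a *\<^sub>R v) - phi x" by (simp add: algebra_simps)
    thus ?thesis using that by (simp add: q_def field_simps)
  qed
  have "(q \<longlongrightarrow> Inf (q ` ({0<..} \<inter> UNIV))) (at 0 within ({0<..} \<inter> UNIV))"
    by (rule Lim_right_bound[where K="phi x - phi (x - v)"]) (use mono bnd in auto)
  hence T2: "(q \<longlongrightarrow> Inf (q ` {0<..})) (at_right 0)" by simp
  have "((\<lambda>t. (f (x + t *\<^sub>R v) - f x) / t + q t) \<longlongrightarrow> gradf x \<bullet> v + Inf (q ` {0<..})) (at_right 0)"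
    by (rule tendsto_add[OF T1 T2])
  moreover have "(\<lambda>t. (f (x + t *\<^sub>R v) - f x) / t + q t)
      = (\<lambda>t. ((\<lambda>y. f y + phi y) (x + t *\<^sub>R v) - (\<lambda>y. f y + phi y) x) / t)"
    by (auto simp: q_def add_divide_distrib[symmetric] algebra_simps)
  ultimately have L: "((\<lambda>t. ((\<lambda>y. f y + phi y) (x + t *\<^sub>R v) - (\<lambda>y. f y + phi y) x) / t)
        \<longlongrightarrow> gradf x \<bullet> v + Inf (q ` {0<..})) (at_right 0)" by simp
  have "dir_deriv (\<lambda>y. f y + phi y) x v = gradf x \<bullet> v + Inf (q ` {0<..})"
    unfolding dir_deriv_def by (rule tendsto_Lim[OF _ L]) simp
  with L show ?thesis by simp
qed

lemma dd_lip:
  fixes psi :: "'a::real_normed_vector \<Rightarrow> real"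
  assumes Tv: "((\<lambda>t. (psi (x + t *\<^sub>R v) - psi x) / t) \<longlongrightarrow> dir_deriv psi x v) (at_right 0)"
    and Tw: "((\<lambda>t. (psi (x + t *\<^sub>R w) - psi x) / t) \<longlongrightarrow> dir_deriv psi x w) (at_right 0)"
    and lip: "\<And>t. 0 < t \<Longrightarrow> t < 1 \<Longrightarrow> \<bar>psi (x + t *\<^sub>R v) - psi (x + t *\<^sub>R w)\<bar> \<le> L * (t * norm (v - w))"
  shows "\<bar>dir_deriv psi x v - dir_deriv psi x w\<bar> \<le> L * norm (v - w)"
proof -
  have T: "((\<lambda>t. \<bar>(psi (x + t *\<^sub>R v) - psi x) / t - (psi (x + t *\<^sub>R w) - psi x) / t\<bar>)
      \<longlongrightarrow> \<bar>dir_deriv psi x v - dir_deriv psi x w\<bar>) (at_right 0)"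
    by (intro tendsto_rabs tendsto_diff Tv Tw)
  have ev: "eventually (\<lambda>t. 0 < t \<and> t < 1) (at_right (0::real))"
    using eventually_at_right_real[of 0 1] by simp
  have "eventually (\<lambda>t. \<bar>(psi (x + t *\<^sub>R v) - psi x) / t - (psi (x + t *\<^sub>R w) - psi x) / t\<bar>
          \<le> L * norm (v - w)) (at_right 0)"
  proof (rule eventually_mono[OF ev])
    fix t :: real assume t: "0 < t \<and> t < 1"
    have "\<bar>(psi (x + t *\<^sub>R v) - psi x) / t - (psi (x + t *\<^sub>R w) - psi x) / t\<bar>
        = \<bar>psi (x + t *\<^sub>R v) - psi (x + t *\<^sub>R w)\<bar> / t"
      using t by (simp add: diff_divide_distrib[symmetric])
    also have "\<dots> \<le> L * (t * norm (v - w)) / t"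
      using lip[of t] t by (intro divide_right_mono) auto
    also have "\<dots> = L * norm (v - w)" using t by simp
    finally show "\<bar>(psi (x + t *\<^sub>R v) - psi x) / t - (psi (x + t *\<^sub>R w) - psi x) / t\<bar>
          \<le> L * norm (v - w)" .
  qed
  from tendsto_upperbound[OF T this] show ?thesis by simp
qed



lemma S_antimono:
  assumes ct: "can_truncate Gam S m \<delta> \<kappa> T" and "i \<le> j" "j \<le> Suc m"
  shows "S j \<subseteq> S i"
  using assms(2,3)
proof (induction j)
  case 0 then show ?case by simp
next
  case (Suc j)
  have st: "S (Suc j) \<subseteq> S j"
  proof (cases "j < m")
    case True then show ?thesis using ct by (auto simp: can_truncate_def)
  next
    case False then have "j = m" using Suc by simp
    then show ?thesis using ct by (auto simp: can_truncate_def)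
  qed
  show ?case
  proof (cases "i = Suc j")
    case True then show ?thesis by simp
  next
    case False then have "i \<le> j" using Suc by simp
    then show ?thesis using Suc st by auto
  qed
qed

lemma level_spec:
  assumes ct: "can_truncate Gam S m \<delta> \<kappa> T"
  shows "level S m y \<le> m \<and> y \<in> S (level S m y) \<and> y \<notin> S (Suc (level S m y))"
proof -
  define A where "A = {i. i \<le> m \<and> y \<in> S i}"
  have fin: "finite A" unfolding A_def by auto
  have "0 \<in> A" using ct by (auto simp: A_def can_truncate_def)
  hence ne: "A \<noteq> {}" by auto
  define i where "i = Max A"
  have iA: "i \<in> A" using Max_in[OF fin ne] by (simp add: i_def)
  have "y \<notin> S (Suc i)"
  proof
    assume yS: "y \<in> S (Suc i)"
    show False
    proof (cases "Suc i \<le> m")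
      case True then have "Suc i \<in> A" using yS by (auto simp: A_def)
      then have "Suc i \<le> i" using Max_ge[OF fin] by (simp add: i_def)
      then show False by simp
    next
      case False then have "i = m" using iA by (auto simp: A_def)
      then show False using yS ct by (auto simp: can_truncate_def)
    qed
  qed
  hence "\<exists>i. i \<le> m \<and> y \<in> S i \<and> y \<notin> S (Suc i)" using iA by (auto simp: A_def)
  then show ?thesis unfolding level_def by (rule someI_ex)
qed

lemma level_ge:
  assumes ct: "can_truncate Gam S m \<delta> \<kappa> T" and "y \<in> S j" "j \<le> Suc m"
  shows "j \<le> level S m y"
proof (rule ccontr)
  assume "\<not> j \<le> level S m y"
  hence "Suc (level S m y) \<le> j" by simp
  hence "S j \<subseteq> S (Suc (level S m y))" using S_antimono[OF ct _ assms(3)] by blast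
  thus False using assms(2) level_spec[OF ct, of y] by auto
qed

lemma loop_step_facts:
  assumes ct: "can_truncate Gam S m \<delta> \<kappa> T" and epos: "0 < a" and ed: "ereal a \<le> \<delta>"
    and lt: "Gam y < ereal a"
  shows "level S m y < m \<and> ereal a \<le> Gam (T y a) \<and> norm (T y a - y) \<le> \<kappa> * a
         \<and> Suc (level S m y) \<le> level S m (T y a)"
proof -
  note lv = level_spec[OF ct, of y]
  have "level S m y \<noteq> m"
  proof
    assume "level S m y = m"
    then have "\<delta> \<le> Gam y" using lv ct by (auto simp: can_truncate_def)
    then show False using lt ed by auto
  qed
  hence ilt: "level S m y < m" using lv by simp
  have "(if ereal a \<le> Gam y then T y a = y
         else T y a \<in> S (Suc (level S m y)) \<and> ereal a \<le> Gam (T y a) \<and> norm (T y a - y) \<le> \<kappa> * a)"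
    using ct epos ed ilt lv unfolding can_truncate_def by blast
  hence tr: "T y a \<in> S (Suc (level S m y)) \<and> ereal a \<le> Gam (T y a) \<and> norm (T y a - y) \<le> \<kappa> * a"
    using lt by (auto split: if_splits)
  have "Suc (level S m y) \<le> level S m (T y a)"
    using level_ge[OF ct, of "T y a" "Suc (level S m y)"] tr ilt by simp
  with tr ilt show ?thesis by simp
qed

lemma loop_props:
  assumes ct: "can_truncate Gam S m \<delta> \<kappa> T" and epos: "\<forall>i. 0 < eps i" and ed: "\<forall>i. ereal (eps i) \<le> \<delta>"
  shows "trunc_loop Gam S m eps T y c y' c' \<Longrightarrow>
    (\<forall>i. c i \<le> c' i) \<and> level S m y \<le> level S m y' \<and> (\<forall>j. c' j \<noteq> c j \<longrightarrow> j < level S m y')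
    \<and> \<not> Gam y' < ereal (eps (c' (level S m y')))"
proof (induction rule: trunc_loop.induct)
  case (stop x c)
  then show ?case by simp
next
  case (step x c x' c')
  define i where "i = level S m x"
  define a where "a = eps (c i)"
  have F: "level S m x < m \<and> ereal a \<le> Gam (T x a) \<and> norm (T x a - x) \<le> \<kappa> * a
         \<and> Suc (level S m x) \<le> level S m (T x a)"
    using loop_step_facts[OF ct, of a x] epos ed step.hyps(1) by (simp add: a_def i_def)
  have IH: "(\<forall>j. (c(i := Suc (c i))) j \<le> c' j) \<and> level S m (T x a) \<le> level S m x'
      \<and> (\<forall>j. c' j \<noteq> (c(i := Suc (c i))) j \<longrightarrow> j < level S m x')
      \<and> \<not> Gam x' < ereal (eps (c' (level S m x')))"
    using step.IH by (simp add: a_def i_def)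
  have lev: "i < level S m x'" using F IH by (simp add: i_def)
  show ?case
  proof (intro conjI allI impI)
    fix j show "c j \<le> c' j" using IH[THEN conjunct1, rule_format, of j] by (cases "j = i") auto
  next
    show "level S m x \<le> level S m x'" using lev by (simp add: i_def)
  next
    fix j assume "c' j \<noteq> c j"
    then show "j < level S m x'"
      using IH lev by (cases "j = i") auto
  next
    show "\<not> Gam x' < ereal (eps (c' (level S m x')))" using IH by simp
  qed
qed

definition tl_sum :: "(nat \<Rightarrow> real) \<Rightarrow> nat \<Rightarrow> real" where
  "tl_sum eps n = (\<Sum>j. eps (j + n))"

lemma tl_sum_step:
  assumes "summable eps"
  shows "tl_sum eps n = eps n + tl_sum eps (Suc n)"
proof -
  have s: "summable (\<lambda>j. eps (j + n))" using summable_ignore_initial_segment[OF assms, of n] by simp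
  have "(\<Sum>j. eps (Suc j + n)) = (\<Sum>j. eps (j + n)) - eps (0 + n)"
    by (rule suminf_split_head[OF s])
  then show ?thesis by (simp add: tl_sum_def)
qed

lemma tl_sum_nonneg:
  assumes "summable eps" "\<forall>i. 0 < eps i"
  shows "0 \<le> tl_sum eps n"
  unfolding tl_sum_def
  using assms summable_ignore_initial_segment[OF assms(1), of n]
  by (intro suminf_nonneg) (auto simp: less_imp_le)

lemma sum_upd:
  fixes h :: "nat \<Rightarrow> real" and m :: nat
  assumes "i \<le> m"
  shows "(\<Sum>j\<le>m. h ((c(i := v)) j)) = (\<Sum>j\<le>m. h (c j)) - h (c i) + h v"
proof -
  have "(\<Sum>j\<le>m. h ((c(i := v)) j)) = h v + (\<Sum>j\<in>{..m} - {i}. h ((c(i := v)) j))"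
    using assms by (subst sum.remove[of _ i]) auto
  also have "(\<Sum>j\<in>{..m} - {i}. h ((c(i := v)) j)) = (\<Sum>j\<in>{..m} - {i}. h (c j))"
    by (rule sum.cong) auto
  also have "(\<Sum>j\<le>m. h (c j)) = h (c i) + (\<Sum>j\<in>{..m} - {i}. h (c j))"
    using assms by (subst sum.remove[of _ i]) auto
  ultimately show ?thesis by simp
qed

lemma loop_W:
  assumes ct: "can_truncate Gam S m \<delta> \<kappa> T" and epos: "\<forall>i. 0 < eps i" and ed: "\<forall>i. ereal (eps i) \<le> \<delta>"
    and sm: "summable eps" and E: "\<forall>i. eps i \<le> E" and L0: "0 \<le> L"
    and lip: "\<forall>p\<in>cball 0 (r0 + real m * \<kappa> * E). \<forall>q\<in>cball 0 (r0 + real m * \<kappa> * E).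
                 \<bar>psi p - psi q\<bar> \<le> L * norm (p - q)"
  shows "trunc_loop Gam S m eps T y c y' c' \<Longrightarrow> norm y \<le> r0 + real (level S m y) * \<kappa> * E \<Longrightarrow>
    psi y' + L * \<kappa> * (\<Sum>i\<le>m. tl_sum eps (c' i)) \<le> psi y + L * \<kappa> * (\<Sum>i\<le>m. tl_sum eps (c i))"
proof (induction rule: trunc_loop.induct)
  case (stop x c)
  then show ?case by simp
next
  case (step x c x' c')
  define i where "i = level S m x"
  define a where "a = eps (c i)"
  have F: "level S m x < m \<and> ereal a \<le> Gam (T x a) \<and> norm (T x a - x) \<le> \<kappa> * a
         \<and> Suc (level S m x) \<le> level S m (T x a)"
    using loop_step_facts[OF ct, of a x] epos ed step.hyps(1) by (simp add: a_def i_def)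
  have k0: "0 < \<kappa>" using ct by (simp add: can_truncate_def)
  have a0: "0 < a" "a \<le> E" using epos E by (auto simp: a_def)
  have lvm: "level S m (T x a) \<le> m" using level_spec[OF ct] by blast
  have nT: "norm (T x a) \<le> r0 + real (level S m (T x a)) * \<kappa> * E"
  proof -
    have "norm (T x a) \<le> norm x + norm (T x a - x)" by (metis add.commute diff_add_cancel norm_triangle_ineq)
    also have "\<dots> \<le> r0 + real (level S m x) * \<kappa> * E + \<kappa> * E"
      using step.prems F a0 k0 by (smt (verit) mult_left_mono)
    also have "\<dots> = r0 + real (Suc (level S m x)) * \<kappa> * E" by (simp add: algebra_simps)
    also have "\<dots> \<le> r0 + real (level S m (T x a)) * \<kappa> * E"
      using F k0 a0 epos E by (intro add_left_mono mult_right_mono) (auto intro: order_trans[of 0 a E])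
    finally show ?thesis .
  qed
  have IH: "psi x' + L * \<kappa> * (\<Sum>i\<le>m. tl_sum eps (c' i))
      \<le> psi (T x a) + L * \<kappa> * (\<Sum>j\<le>m. tl_sum eps ((c(i := Suc (c i))) j))"
    using step.IH nT by (simp add: a_def i_def)
  have E0: "0 \<le> E" using a0 by simp
  have bx: "x \<in> cball 0 (r0 + real m * \<kappa> * E)"
  proof -
    have "real (level S m x) * \<kappa> * E \<le> real m * \<kappa> * E"
      using F k0 E0 by (intro mult_right_mono) auto
    then show ?thesis using step.prems by simp
  qed
  have bT: "T x a \<in> cball 0 (r0 + real m * \<kappa> * E)"
  proof -
    have "real (level S m (T x a)) * \<kappa> * E \<le> real m * \<kappa> * E"
      using lvm k0 E0 by (intro mult_right_mono) auto
    then show ?thesis using nT by simp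
  qed
  have "psi (T x a) \<le> psi x + L * norm (T x a - x)" using lip bx bT by fastforce
  also have "\<dots> \<le> psi x + L * (\<kappa> * a)" using F L0 by (simp add: mult_left_mono)
  finally have P: "psi (T x a) \<le> psi x + L * \<kappa> * a" by simp
  have im: "i \<le> m" using F by (simp add: i_def)
  have "(\<Sum>j\<le>m. tl_sum eps ((c(i := Suc (c i))) j)) = (\<Sum>j\<le>m. tl_sum eps (c j)) - a"
    using sum_upd[OF im, of "tl_sum eps" c "Suc (c i)"] tl_sum_step[OF sm, of "c i"] by (simp add: a_def)
  hence "L * \<kappa> * (\<Sum>j\<le>m. tl_sum eps ((c(i := Suc (c i))) j)) = L * \<kappa> * (\<Sum>j\<le>m. tl_sum eps (c j)) - L * \<kappa> * a"
    by (simp add: right_diff_distrib)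
  with IH P show ?case by linarith
qed



lemma quad_bound:
  fixes B :: "real^'n^'n" and s :: "real^'n"
  shows "\<bar>s \<bullet> (B *v s)\<bar> \<le> real CARD('n) * real CARD('n) * norm B * (norm s)^2"
proof -
  have c: "\<And>i j. \<bar>B $ i $ j\<bar> \<le> norm B"
  proof -
    fix i j
    have "\<bar>B $ i $ j\<bar> \<le> norm (B $ i)" by (rule component_le_norm_cart)
    also have "\<dots> \<le> norm B" by (rule Finite_Cartesian_Product.norm_nth_le)
    finally show "\<bar>B $ i $ j\<bar> \<le> norm B" .
  qed
  have o: "onorm ((*v) B) \<le> real CARD('n) * real CARD('n) * norm B"
    by (rule onorm_le_matrix_component[OF c])
  have a: "\<bar>s \<bullet> (B *v s)\<bar> \<le> norm s * norm (B *v s)" by (rule Cauchy_Schwarz_ineq2)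
  have "norm (B *v s) \<le> onorm ((*v) B) * norm s"
    by (rule onorm[OF matrix_vector_mul_bounded_linear])
  also have "\<dots> \<le> real CARD('n) * real CARD('n) * norm B * norm s"
    by (rule mult_right_mono[OF o]) simp
  finally have b: "norm (B *v s) \<le> real CARD('n) * real CARD('n) * norm B * norm s" .
  have "norm s * norm (B *v s) \<le> norm s * (real CARD('n) * real CARD('n) * norm B * norm s)"
    by (rule mult_left_mono[OF b]) simp
  with a show ?thesis by (simp add: power2_eq_square algebra_simps)
qed

lemma tr_model_dec:
  "tr_model P g B 0 - tr_model P g B s = - (g \<bullet> s) - 1/2 * (s \<bullet> (B *v s))"
  by (simp add: tr_model_def)



locale algo =
  fixes f phi psi :: "real^'n \<Rightarrow> real" and gradf :: "real^'n \<Rightarrow> real^'n"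
    and u :: "real^'n \<Rightarrow> real" and d :: "real^'n \<Rightarrow> real^'n"
    and Gs :: "real^'n \<Rightarrow> real^'n \<Rightarrow> ereal"
    and S :: "nat \<Rightarrow> (real^'n) set" and m :: nat and \<delta> :: ereal and \<kappa> :: real
    and T :: "real^'n \<Rightarrow> real \<Rightarrow> real^'n"
    and \<eta> \<eta>1 \<eta>2 r1 r2 \<Delta>max \<gamma>1 \<gamma>2 :: real
    and \<epsilon> :: "nat \<Rightarrow> real" and ell :: "real \<Rightarrow> real"
    and x :: "nat \<Rightarrow> real^'n" and \<Delta> :: "nat \<Rightarrow> real" and c :: "nat \<Rightarrow> nat \<Rightarrow> nat"
    and B :: "nat \<Rightarrow> real^'n^'n"
    and g sC s sf xt :: "nat \<Rightarrow> real^'n"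
    and aC \<alpha>0 \<alpha> \<rho>1 \<rho>2 :: "nat \<Rightarrow> real"
    and R \<kappa>B :: real
  \<comment> \<open>problem data\<close>
  assumes f_C1: "\<forall>y. (f has_derivative (\<lambda>h. gradf y \<bullet> h)) (at y)" "continuous_on UNIV gradf"
    and phi_convex: "convex_on UNIV phi"
    and psi_def: "psi = (\<lambda>y. f y + phi y)"
  \<comment> \<open>pseudo-gradient g(y) = u(y) d(y)\<close>
    and pg_nonstat: "\<forall>y. \<not> stationary gradf phi y \<longrightarrow>
          norm (d y) = 1 \<and> dir_deriv psi y (d y) < 0 \<and> dir_deriv psi y (d y) \<le> u y \<and> u y < 0"
    and pg_stat: "\<forall>y. stationary gradf phi y \<longrightarrow> d y = 0 \<and> u y = 0"
  \<comment> \<open>stepsize safeguard with values in (0,\<infinity>]\<close>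
    and Gs_pos: "\<forall>y e. norm e = 1 \<longrightarrow> 0 < Gs y e"
  \<comment> \<open>psi can be truncated\<close>
    and trunc: "can_truncate (Gamma_pt psi) S m \<delta> \<kappa> T"
  \<comment> \<open>algorithm parameters\<close>
    and params: "0 < \<eta>" "\<eta> < \<eta>1" "\<eta>1 < \<eta>2" "\<eta>2 < 1" "0 < r1" "r1 < 1" "1 < r2"
       "0 < \<Delta>max" "0 < \<gamma>1" "0 < \<gamma>2"
    and eps_seq: "\<forall>i. 0 < \<epsilon> i" "\<forall>i. \<epsilon> (Suc i) < \<epsilon> i" "summable \<epsilon>" "\<forall>i. ereal (\<epsilon> i) \<le> \<delta>"
    and ell_ass: "\<forall>t>0. 0 \<le> ell t \<and> ell t \<le> 1/2" "\<forall>a b. 0 < a \<longrightarrow> a \<le> b \<longrightarrow> ell b \<le> ell a"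
       "(ell \<longlongrightarrow> 0) (at_right 0)"
  \<comment> \<open>initialization\<close>
    and init: "0 < \<Delta> 0" "c 0 = (\<lambda>i. 0)"
  \<comment> \<open>the algorithm does not terminate\<close>
    and g_def: "\<forall>k. g k = u (x k) *\<^sub>R d (x k)"
    and nonterm: "\<forall>k. g k \<noteq> 0"
  \<comment> \<open>Cauchy point\<close>
    and cauchy: "\<forall>k. 0 \<le> aC k \<and> aC k \<le> \<Delta> k / norm (g k) \<and>
          (\<forall>t. 0 \<le> t \<and> t \<le> \<Delta> k / norm (g k) \<longrightarrow>
             tr_model (psi (x k)) (g k) (B k) (- (aC k *\<^sub>R g k))
               \<le> tr_model (psi (x k)) (g k) (B k) (- (t *\<^sub>R g k)))"
    and sC_def: "\<forall>k. sC k = - (aC k *\<^sub>R g k)"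
  \<comment> \<open>trial step\<close>
    and step: "\<forall>k. norm (s k) \<le> \<Delta> k \<and>
          tr_model (psi (x k)) (g k) (B k) 0 - tr_model (psi (x k)) (g k) (B k) (s k)
            \<ge> \<gamma>1 / 2 * norm (g k) * min (\<Delta> k) (\<gamma>2 * norm (g k)) \<and>
          tr_model (psi (x k)) (g k) (B k) 0 - tr_model (psi (x k)) (g k) (B k) (s k)
            \<ge> (1 - ell (norm (s k))) *
              (tr_model (psi (x k)) (g k) (B k) 0 - tr_model (psi (x k)) (g k) (B k) (sC k))"
    and rho1_def: "\<forall>k. \<rho>1 k = (psi (x k) - psi (x k + s k)) /
          (tr_model (psi (x k)) (g k) (B k) 0 - tr_model (psi (x k)) (g k) (B k) (s k))"
  \<comment> \<open>stepsize computation (sf k, \<alpha> k are the final s^k, \<alpha>_k of this computation)\<close>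
    and alpha0_def: "\<forall>k. \<alpha>0 k = real_of_ereal (min (Gs (x k) (sgn (s k))) (ereal (norm (s k))))"
    and sf_def: "\<forall>k. sf k = (if tr_model (psi (x k)) (g k) (B k) 0
                                 - tr_model (psi (x k)) (g k) (B k) (\<alpha>0 k *\<^sub>R sgn (s k))
                               < \<alpha>0 k / (2 * norm (s k)) *
                                 (tr_model (psi (x k)) (g k) (B k) 0
                                   - tr_model (psi (x k)) (g k) (B k) (s k))
                            then sC k else s k)"
    and alpha_def: "\<forall>k. \<alpha> k = real_of_ereal (min (Gs (x k) (sgn (sf k))) (ereal (norm (sf k))))"
    and rho2_def: "\<forall>k. \<rho>2 k = (psi (x k) - psi (x k + \<alpha> k *\<^sub>R sgn (sf k))) /
          (tr_model (psi (x k)) (g k) (B k) 0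
            - tr_model (psi (x k)) (g k) (B k) (\<alpha> k *\<^sub>R sgn (sf k)))"
  \<comment> \<open>updates\<close>
    and upd_succ: "\<forall>k. \<rho>1 k \<ge> \<eta>1 \<longrightarrow> xt k = x k + s k \<and>
          \<Delta> (Suc k) = (if \<rho>1 k > \<eta>2 then min \<Delta>max (r2 * \<Delta> k) else \<Delta> k)"
    and upd_fail: "\<forall>k. \<rho>1 k < \<eta>1 \<longrightarrow>
          \<Delta> (Suc k) = (if \<rho>2 k < \<eta>1 then r1 * \<Delta> k
                        else if \<rho>2 k > \<eta>2 then min \<Delta>max (r2 * \<Delta> k) else \<Delta> k) \<and>
          xt k = (if \<rho>2 k \<ge> \<eta> then x k + \<alpha> k *\<^sub>R sgn (sf k) else x k)"
  \<comment> \<open>truncation step\<close>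
    and trunc_step: "\<forall>k. trunc_loop (Gamma_pt psi) S m \<epsilon> T (xt k) (c k) (x (Suc k)) (c (Suc k))"
  \<comment> \<open>(A.1)\<close>
    and A1: "bdd_below (range psi)"
  \<comment> \<open>(B.1)\<close>
    and B1: "0 < R" "\<forall>k. x k \<in> ball 0 R"
  \<comment> \<open>(B.2)\<close>
    and B2: "0 < \<kappa>B" "\<forall>k. norm (B k) \<le> \<kappa>B"
  \<comment> \<open>(B.3)\<close>
    and B3: "\<forall>r::nat \<Rightarrow> nat. strict_mono r \<and> convergent (\<lambda>l. x (r l)) \<and> (\<lambda>l. \<alpha> (r l)) \<longlonglongrightarrow> 0 \<longrightarrow>
          (\<lambda>l. psi (x (r l) + \<alpha> (r l) *\<^sub>R sgn (sf (r l))) - psi (x (r l))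
                 - \<alpha> (r l) * dir_deriv psi (x (r l)) (sgn (sf (r l))))
            \<in> o(\<lambda>l. \<alpha> (r l))"
  \<comment> \<open>(B.4)\<close>
    and B4: "\<forall>e>0. \<exists>e'>0. \<forall>k. ereal e \<le> Gamma_pt psi (x k) \<longrightarrow> ereal e' \<le> Gs (x k) (sgn (sf k))"

begin

abbreviation md :: "nat \<Rightarrow> real^'n \<Rightarrow> real" where
  "md k w \<equiv> tr_model (psi (x k)) (g k) (B k) 0 - tr_model (psi (x k)) (g k) (B k) w"

lemma ell0: "0 < t \<Longrightarrow> ell t = 0"
proof -
  assume t: "0 < t"
  have ev: "eventually (\<lambda>a. ell t \<le> ell a) (at_right 0)"
    using eventually_at_right_real[OF t] ell_ass(2) t
    by (auto elim!: eventually_mono)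
  have "ell t \<le> 0" by (rule tendsto_lowerbound[OF ell_ass(3) ev]) simp
  with ell_ass(1) t show ?thesis by force
qed
definition DD :: real where "DD = max (\<Delta> 0) \<Delta>max"

lemma Delta_bounds: "0 < \<Delta> k \<and> \<Delta> k \<le> DD"
proof (induction k)
  case 0 then show ?case using init by (simp add: DD_def)
next
  case (Suc k)
  have DDm: "\<Delta>max \<le> DD" by (simp add: DD_def)
  show ?case
  proof (cases "\<rho>1 k \<ge> \<eta>1")
    case True
    then have "\<Delta> (Suc k) = (if \<rho>1 k > \<eta>2 then min \<Delta>max (r2 * \<Delta> k) else \<Delta> k)" using upd_succ by blast
    then show ?thesis using Suc params DDm by (auto simp: min_def)
  next
    case False
    then have "\<Delta> (Suc k) = (if \<rho>2 k < \<eta>1 then r1 * \<Delta> k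
                        else if \<rho>2 k > \<eta>2 then min \<Delta>max (r2 * \<Delta> k) else \<Delta> k)" using upd_fail by auto
    moreover have r1le: "r1 * \<Delta> k \<le> \<Delta> k" using Suc params by (simp add: mult_le_cancel_right1)
    moreover have "r1 * \<Delta> k \<le> DD" using r1le Suc by linarith
    moreover have "0 < r1 * \<Delta> k" using Suc params by simp
    ultimately show ?thesis using Suc params DDm by (auto simp: min_def)
  qed
qed

lemma Delta_pos: "0 < \<Delta> k" using Delta_bounds by blast
lemma Delta_le: "\<Delta> k \<le> DD" using Delta_bounds by blast
lemma DD_pos: "0 < DD" using Delta_bounds[of 0] by simp

lemma nonstat: "\<not> stationary gradf phi (x k)"
  using pg_stat g_def nonterm by auto

lemma gk_facts: "norm (d (x k)) = 1 \<and> dir_deriv psi (x k) (d (x k)) \<le> u (x k) \<and> u (x k) < 0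
   \<and> norm (g k) = - u (x k) \<and> g k = u (x k) *\<^sub>R d (x k)"
  using pg_nonstat nonstat[of k] g_def by auto

definition Rb :: real where "Rb = R + DD + real m * \<kappa> * \<epsilon> 0 + 2"

lemma kappa_pos: "0 < \<kappa>" using trunc by (simp add: can_truncate_def)

lemma mke_nonneg: "0 \<le> real m * \<kappa> * \<epsilon> 0"
  using kappa_pos eps_seq(1) by (simp add: less_imp_le)

lemma Rb_ge: "R + DD + real m * \<kappa> * \<epsilon> 0 + 2 \<le> Rb" "R + 1 \<le> Rb" "R + DD \<le> Rb"
  using mke_nonneg DD_pos by (auto simp: Rb_def)

lemma psi_lip_ex: "\<exists>L>0. \<forall>p\<in>cball 0 Rb. \<forall>q\<in>cball 0 Rb. \<bar>psi p - psi q\<bar> \<le> L * norm (p - q)"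
proof -
  obtain L1 where L1: "L1 > 0" "\<forall>p\<in>cball 0 Rb. \<forall>q\<in>cball 0 Rb. \<bar>f p - f q\<bar> \<le> L1 * norm (p - q)"
    using C1_lipschitz_cball[OF f_C1] by blast
  obtain L2 where L2: "L2 > 0" "\<forall>p\<in>cball 0 Rb. \<forall>q\<in>cball 0 Rb. \<bar>phi p - phi q\<bar> \<le> L2 * norm (p - q)"
    using convex_lipschitz_cball[OF phi_convex] by blast
  show ?thesis
  proof (intro exI[of _ "L1 + L2"] conjI ballI)
    show "0 < L1 + L2" using L1 L2 by simp
    fix p q :: "real^'n" assume p: "p \<in> cball 0 Rb" and q: "q \<in> cball 0 Rb"
    have "\<bar>psi p - psi q\<bar> \<le> \<bar>f p - f q\<bar> + \<bar>phi p - phi q\<bar>" by (simp add: psi_def)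
    also have "\<dots> \<le> L1 * norm (p - q) + L2 * norm (p - q)" using L1 L2 p q by (intro add_mono) auto
    finally show "\<bar>psi p - psi q\<bar> \<le> (L1 + L2) * norm (p - q)" by (simp add: algebra_simps)
  qed
qed

definition Lc :: real where
  "Lc = (SOME L. L > 0 \<and> (\<forall>p\<in>cball 0 Rb. \<forall>q\<in>cball 0 Rb. \<bar>psi p - psi q\<bar> \<le> L * norm (p - q)))"

lemma Lc: "Lc > 0" "\<And>p q. p \<in> cball 0 Rb \<Longrightarrow> q \<in> cball 0 Rb \<Longrightarrow> \<bar>psi p - psi q\<bar> \<le> Lc * norm (p - q)"
  using someI_ex[OF psi_lip_ex] unfolding Lc_def[symmetric] by auto

lemma dd_tend: "((\<lambda>t. (psi (y + t *\<^sub>R v) - psi y) / t) \<longlongrightarrow> dir_deriv psi y v) (at_right 0)"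
  using dd_tendsto[OF f_C1(1) phi_convex, of y v] unfolding psi_def by simp

lemma dd_lipschitz:
  assumes y: "norm y \<le> R" and v: "norm v \<le> 1" and w: "norm w \<le> 1"
  shows "\<bar>dir_deriv psi y v - dir_deriv psi y w\<bar> \<le> Lc * norm (v - w)"
proof (rule dd_lip[OF dd_tend dd_tend])
  fix t :: real assume t: "0 < t" "t < 1"
  have b: "norm (y + t *\<^sub>R z) \<le> Rb" if "norm z \<le> 1" for z
  proof -
    have "norm (y + t *\<^sub>R z) \<le> norm y + norm (t *\<^sub>R z)" by (rule norm_triangle_ineq)
    also have "norm (t *\<^sub>R z) \<le> 1" using t that by (simp add: mult_le_one)
    finally show ?thesis using y Rb_ge(2) by simp
  qed
  have e: "norm ((y + t *\<^sub>R v) - (y + t *\<^sub>R w)) = t * norm (v - w)"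
    using t by (simp add: scaleR_diff_right[symmetric])
  have "\<bar>psi (y + t *\<^sub>R v) - psi (y + t *\<^sub>R w)\<bar> \<le> Lc * norm ((y + t *\<^sub>R v) - (y + t *\<^sub>R w))"
    using Lc(2)[of "y + t *\<^sub>R v" "y + t *\<^sub>R w"] b[OF v] b[OF w] by (simp only: mem_cball_0)
  also note e
  finally show "\<bar>psi (y + t *\<^sub>R v) - psi (y + t *\<^sub>R w)\<bar> \<le> Lc * (t * norm (v - w))" .
qed

lemma dd_zero: "dir_deriv psi y 0 = 0"
  unfolding dir_deriv_def by (rule tendsto_Lim) auto

lemma dd_bound:
  assumes y: "norm y \<le> R" and v: "norm v \<le> 1"
  shows "\<bar>dir_deriv psi y v\<bar> \<le> Lc"
proof -
  have "\<bar>dir_deriv psi y v - dir_deriv psi y 0\<bar> \<le> Lc * norm (v - 0)"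
    by (rule dd_lipschitz[OF y v]) simp
  also have "\<dots> \<le> Lc" using v Lc(1) by (simp add: mult_le_cancel_left1)
  finally show ?thesis by (simp add: dd_zero)
qed

lemma xk_norm: "norm (x k) \<le> R" using B1(2) by (simp add: less_imp_le)

lemma g_bound: "norm (g k) \<le> Lc"
proof -
  have "\<bar>dir_deriv psi (x k) (d (x k))\<bar> \<le> Lc" using dd_bound[OF xk_norm] gk_facts by simp
  then show ?thesis using gk_facts[of k] by linarith
qed

definition Kq :: real where "Kq = real CARD('n) * real CARD('n) * \<kappa>B"

lemma Kq_pos: "0 < Kq" using B2 by (simp add: Kq_def)

lemma quadB: "\<bar>w \<bullet> (B k *v w)\<bar> \<le> Kq * (norm w)^2"
proof -
  have "\<bar>w \<bullet> (B k *v w)\<bar> \<le> real CARD('n) * real CARD('n) * norm (B k) * (norm w)^2" by (rule quad_bound)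
  also have "\<dots> \<le> Kq * (norm w)^2" unfolding Kq_def using B2
    by (intro mult_right_mono mult_left_mono) auto
  finally show ?thesis .
qed

lemma md_eq: "md k w = - (g k \<bullet> w) - 1/2 * (w \<bullet> (B k *v w))"
  by (rule tr_model_dec)

lemma md_upper: "md k w \<le> Lc * norm w + Kq / 2 * (norm w)^2"
proof -
  have "- (g k \<bullet> w) \<le> norm (g k) * norm w" using Cauchy_Schwarz_ineq2[of "g k" w] by linarith
  also have "\<dots> \<le> Lc * norm w" using g_bound by (simp add: mult_right_mono)
  finally have a: "- (g k \<bullet> w) \<le> Lc * norm w" .
  have "- (1/2 * (w \<bullet> (B k *v w))) \<le> Kq / 2 * (norm w)^2" using quadB[of w k] by linarith
  with a show ?thesis by (simp add: md_eq)
qed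

lemma norm_lower:
  assumes "md k w \<ge> th" "th > 0"
  shows "norm w \<ge> min 1 (th / (Lc + Kq))"
proof (rule ccontr)
  assume "\<not> ?thesis"
  hence w1: "norm w < 1" and w2: "norm w < th / (Lc + Kq)" by auto
  have LK: "0 < Lc + Kq" using Lc(1) Kq_pos by simp
  have "(norm w)^2 \<le> norm w" using mult_left_le_one_le[of "norm w" "norm w"] w1 by (simp add: power2_eq_square)
  hence "Kq/2 * (norm w)^2 \<le> Kq/2 * norm w" using Kq_pos by (intro mult_left_mono) auto
  hence "md k w \<le> Lc * norm w + Kq/2 * norm w" using md_upper[of k w] by linarith
  also have "\<dots> \<le> (Lc + Kq) * norm w" using Kq_pos by (simp add: algebra_simps)
  also have "\<dots> < th" using w2 LK by (simp add: pos_less_divide_eq mult.commute)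
  finally show False using assms by simp
qed
lemma mv_scale: "(M::real^'n^'n) *v (t *\<^sub>R w) = t *\<^sub>R (M *v w)"
  by (simp add: matrix_vector_mult_def vec_eq_iff sum_distrib_left algebra_simps)

lemma md_scale: "md k (t *\<^sub>R w) = t * (- (g k \<bullet> w)) - t^2/2 * (w \<bullet> (B k *v w))"
  by (simp add: md_eq mv_scale power2_eq_square algebra_simps)

lemma md_td: "md k (t *\<^sub>R d (x k)) = t * (- u (x k)) - t^2/2 * (d (x k) \<bullet> (B k *v d (x k)))"
proof -
  have "g k \<bullet> d (x k) = u (x k)" using gk_facts[of k] by (simp add: inner_scaleR_left dot_square_norm)
  then show ?thesis by (simp add: md_scale)
qed

lemma bd: "\<bar>d (x k) \<bullet> (B k *v d (x k))\<bar> \<le> Kq"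
  using quadB[of "d (x k)" k] gk_facts[of k] by simp

lemma C_opt:
  assumes "0 \<le> t" "t \<le> \<Delta> k"
  shows "md k (t *\<^sub>R d (x k)) \<le> md k (sC k)"
proof -
  define t' where "t' = t / norm (g k)"
  have ng: "0 < norm (g k)" using nonterm by simp
  have t': "0 \<le> t'" "t' \<le> \<Delta> k / norm (g k)" using assms ng by (auto simp: t'_def divide_right_mono)
  have "tr_model (psi (x k)) (g k) (B k) (- (aC k *\<^sub>R g k)) \<le> tr_model (psi (x k)) (g k) (B k) (- (t' *\<^sub>R g k))"
    using cauchy t' by blast
  moreover have "- (t' *\<^sub>R g k) = t *\<^sub>R d (x k)"
    using gk_facts[of k] ng by (simp add: t'_def)
  ultimately show ?thesis using sC_def by simp
qed

lemma sC_eq: "sC k = (aC k * (- u (x k))) *\<^sub>R d (x k)"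
  using sC_def gk_facts[of k] by simp

lemma aC_pos: "0 < aC k"
proof (rule ccontr)
  assume "\<not> 0 < aC k"
  moreover have "0 \<le> aC k" using cauchy by blast
  ultimately have a0: "aC k = 0" by simp
  hence "sC k = 0" using sC_def by simp
  hence md0: "md k (sC k) = 0" by (simp add: md_eq)
  define t where "t = min (\<Delta> k) (- u (x k) / Kq)"
  have u0: "0 < - u (x k)" using gk_facts[of k] by simp
  have t0: "0 < t" "t \<le> \<Delta> k" "t * Kq \<le> - u (x k)" using Delta_pos u0 Kq_pos
    by (auto simp: t_def min_def pos_le_divide_eq field_simps)
  have "t^2/2 * (d (x k) \<bullet> (B k *v d (x k))) \<le> t^2/2 * Kq"
    using bd[of k] by (intro mult_left_mono) auto
  also have "\<dots> = t * (t * Kq) / 2" by (simp add: power2_eq_square)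
  also have "\<dots> \<le> t * (- u (x k)) / 2" using t0 by (intro divide_right_mono mult_left_mono) auto
  finally have "md k (t *\<^sub>R d (x k)) \<ge> t * (- u (x k)) / 2" by (simp add: md_td)
  moreover have "t * (- u (x k)) > 0" by (rule mult_pos_pos) (use t0 u0 in auto)
  hence "t * (- u (x k)) / 2 > 0" by simp
  ultimately show False using C_opt[of t k] t0 md0 by simp
qed

lemma sC_norm: "norm (sC k) = aC k * (- u (x k))" "norm (sC k) \<le> \<Delta> k" "0 < norm (sC k)"
proof -
  have u0: "0 < - u (x k)" using gk_facts[of k] by simp
  have un: "u (x k) < 0" using gk_facts[of k] by simp
  have neg: "aC k * u (x k) < 0" by (rule mult_pos_neg[OF aC_pos un])
  show n: "norm (sC k) = aC k * (- u (x k))" using sC_eq gk_facts[of k] neg by simp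
  have ng: "0 < norm (g k)" using nonterm by simp
  have "aC k \<le> \<Delta> k / norm (g k)" using cauchy by blast
  hence "aC k * norm (g k) \<le> \<Delta> k" using ng by (simp add: pos_le_divide_eq)
  then show "norm (sC k) \<le> \<Delta> k" using n gk_facts[of k] by simp
  show "0 < norm (sC k)" using n mult_pos_pos[OF aC_pos u0] by simp
qed

lemma sgn_sC: "sgn (sC k) = d (x k)"
proof -
  have u0: "0 < - u (x k)" using gk_facts[of k] by simp
  have p: "0 < aC k * (- u (x k))" by (rule mult_pos_pos[OF aC_pos u0])
  have "sgn (sC k) = sgn ((aC k * (- u (x k))) *\<^sub>R d (x k))" by (rule arg_cong[OF sC_eq])
  also have "\<dots> = sgn (aC k * (- u (x k))) *\<^sub>R sgn (d (x k))" by (rule sgn_scaleR)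
  also have "\<dots> = d (x k)"
  proof -
    have s1: "sgn (aC k * (- u (x k))) = (1::real)" using p by (rule sgn_pos)
    have s2: "sgn (d (x k)) = d (x k)" using gk_facts[of k] by (simp add: sgn_div_norm)
    show ?thesis by (simp only: s1 s2 scaleR_one)
  qed
  finally show ?thesis .
qed

lemma C_small:
  assumes a: "0 < a" "a \<le> norm (sC k)"
  shows "md k (a *\<^sub>R d (x k)) \<ge> a * (- u (x k)) / 2"
proof -
  define b where "b = d (x k) \<bullet> (B k *v d (x k))"
  define U where "U = - u (x k)"
  define ts where "ts = norm (sC k)"
  have U0: "0 < U" using gk_facts[of k] by (simp add: U_def)
  have tsD: "ts \<le> \<Delta> k" using sC_norm by (simp add: ts_def)
  have sCts: "sC k = ts *\<^sub>R d (x k)" using sC_eq sC_norm(1) by (simp add: ts_def)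
  have q: "md k (t *\<^sub>R d (x k)) = t * U - t^2/2 * b" for t by (simp add: md_td U_def b_def)
  have key: "a * b \<le> U"
  proof (cases "b \<le> 0")
    case True then show ?thesis using a U0 by (smt (verit) mult_nonneg_nonpos)
  next
    case False
    hence b0: "0 < b" by simp
    define t0 where "t0 = U / b"
    have "ts * b \<le> U"
    proof (cases "t0 \<le> \<Delta> k")
      case True
      have "md k (t0 *\<^sub>R d (x k)) \<le> md k (sC k)" using C_opt[of t0 k] True U0 b0 by (simp add: t0_def)
      hence "t0 * U - t0^2/2 * b \<le> ts * U - ts^2/2 * b" using q sCts by simp
      moreover have "(t0 * U - t0^2/2 * b) - (ts * U - ts^2/2 * b) = b/2 * (ts - t0)^2"
        using b0 by (simp add: t0_def power2_eq_square field_simps)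
      ultimately have "b/2 * (ts - t0)^2 \<le> 0" by simp
      hence "(ts - t0)^2 \<le> 0" using b0 by (simp add: mult_le_0_iff)
      hence "ts = t0" by simp
      then show ?thesis using b0 by (simp add: t0_def)
    next
      case False
      hence "ts < t0" using tsD by simp
      then show ?thesis using b0 by (simp add: t0_def pos_less_divide_eq less_imp_le)
    qed
    moreover have "a * b \<le> ts * b" using a b0 by (simp add: ts_def)
    ultimately show ?thesis by simp
  qed
  have "a^2/2 * b = a * (a * b) / 2" by (simp add: power2_eq_square)
  also have "\<dots> \<le> a * U / 2" using key a by (intro divide_right_mono mult_left_mono) auto
  finally show ?thesis using q[of a] by (simp add: U_def)
qed

lemma C_dec:
  assumes "0 \<le> t" "t \<le> \<Delta> k"
  shows "md k (sC k) \<ge> t * (- u (x k)) - Kq * t^2 / 2"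
proof -
  have "t^2/2 * (d (x k) \<bullet> (B k *v d (x k))) \<le> t^2/2 * Kq"
    using bd[of k] by (intro mult_left_mono) auto
  also have "\<dots> = Kq * t^2 / 2" by simp
  finally have "md k (t *\<^sub>R d (x k)) \<ge> t * (- u (x k)) - Kq * t^2 / 2" by (simp add: md_td)
  then show ?thesis using C_opt[OF assms] by simp
qed

lemma S1: "md k (s k) \<ge> \<gamma>1 / 2 * norm (g k) * min (\<Delta> k) (\<gamma>2 * norm (g k))"
  using step by blast

lemma S1pos: "md k (s k) > 0"
proof -
  have "0 < norm (g k)" using nonterm by simp
  hence "0 < \<gamma>1 / 2 * norm (g k) * min (\<Delta> k) (\<gamma>2 * norm (g k))" using params Delta_pos by simp
  then show ?thesis using S1[of k] by simp
qed

lemma s_nz: "s k \<noteq> 0" using S1pos[of k] by (auto simp: md_eq)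

lemma s_norm: "norm (s k) \<le> \<Delta> k" using step by blast

lemma S2: "md k (s k) \<ge> md k (sC k)"
proof -
  have "ell (norm (s k)) = 0" using ell0 s_nz by simp
  then show ?thesis using step[rule_format, of k] by simp
qed

lemma ereal_min_facts:
  assumes G: "0 < G" and n: "0 < n"
  shows "0 < real_of_ereal (min G (ereal n)) \<and> real_of_ereal (min G (ereal n)) \<le> n
        \<and> (\<forall>e. ereal e \<le> G \<longrightarrow> min e n \<le> real_of_ereal (min G (ereal n)))"
  using G n by (cases G) (auto simp: min_def)

lemma sf_facts: "(sf k = s k \<and> \<alpha> k = \<alpha>0 k \<and> md k (\<alpha> k *\<^sub>R sgn (s k)) \<ge> \<alpha> k / (2 * norm (s k)) * md k (s k))
   \<or> sf k = sC k"
  using sf_def[rule_format, of k] alpha0_def alpha_def by (auto split: if_splits)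

lemma sf_nz: "sf k \<noteq> 0" and sf_norm: "norm (sf k) \<le> \<Delta> k"
  using sf_facts[of k] s_nz[of k] sC_norm[of k] s_norm[of k] by auto

lemma v_unit: "norm (sgn (sf k)) = 1" using sf_nz[of k] by (simp add: norm_sgn)

lemma alpha_facts: "0 < \<alpha> k" "\<alpha> k \<le> norm (sf k)"
  "\<And>e. ereal e \<le> Gs (x k) (sgn (sf k)) \<Longrightarrow> min e (norm (sf k)) \<le> \<alpha> k"
proof -
  have G: "0 < Gs (x k) (sgn (sf k))" using Gs_pos v_unit by blast
  have n: "0 < norm (sf k)" using sf_nz by simp
  note F = ereal_min_facts[OF G n]
  show "0 < \<alpha> k" "\<alpha> k \<le> norm (sf k)" using F alpha_def by auto
  fix e assume "ereal e \<le> Gs (x k) (sgn (sf k))"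
  then show "min e (norm (sf k)) \<le> \<alpha> k" using F alpha_def by auto
qed

lemma md_alpha_lb: "md k (\<alpha> k *\<^sub>R sgn (sf k)) \<ge> min (\<alpha> k * (- u (x k)) / 2) (\<alpha> k / (2 * norm (s k)) * md k (s k))"
proof (cases "sf k = sC k")
  case True
  have a: "0 < \<alpha> k" "\<alpha> k \<le> norm (sC k)" using alpha_facts(1,2)[of k] True by auto
  have "md k (\<alpha> k *\<^sub>R sgn (sf k)) \<ge> \<alpha> k * (- u (x k)) / 2" using C_small[OF a] True sgn_sC by simp
  then show ?thesis by linarith
next
  case False
  then have "sf k = s k \<and> md k (\<alpha> k *\<^sub>R sgn (s k)) \<ge> \<alpha> k / (2 * norm (s k)) * md k (s k)"
    using sf_facts[of k] by auto
  then show ?thesis by auto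
qed

lemma md_alpha_pos: "md k (\<alpha> k *\<^sub>R sgn (sf k)) > 0"
proof -
  have a: "0 < \<alpha> k" using alpha_facts by simp
  have u0: "0 < - u (x k)" using gk_facts[of k] by simp
  have "0 < \<alpha> k * (- u (x k))" by (rule mult_pos_pos[OF a u0])
  moreover have "0 < \<alpha> k / (2 * norm (s k)) * md k (s k)" using a s_nz[of k] S1pos[of k] by simp
  ultimately show ?thesis using md_alpha_lb[of k] by linarith
qed

definition dec :: "nat \<Rightarrow> real" where "dec k = psi (x k) - psi (xt k)"

lemma mv1: "\<rho>1 k \<ge> \<eta>1 \<Longrightarrow> xt k = x k + s k \<and> dec k \<ge> \<eta>1 * md k (s k)"
proof -
  assume r: "\<rho>1 k \<ge> \<eta>1"
  have xt: "xt k = x k + s k" using upd_succ r by blast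
  have "\<eta>1 \<le> (psi (x k) - psi (x k + s k)) / md k (s k)" using r rho1_def by simp
  hence "\<eta>1 * md k (s k) \<le> psi (x k) - psi (x k + s k)" using S1pos[of k] by (simp add: pos_le_divide_eq)
  then show ?thesis using xt by (simp add: dec_def)
qed

lemma mv2: "\<rho>1 k < \<eta>1 \<Longrightarrow> \<eta> \<le> \<rho>2 k \<Longrightarrow>
    xt k = x k + \<alpha> k *\<^sub>R sgn (sf k) \<and> dec k \<ge> \<eta> * md k (\<alpha> k *\<^sub>R sgn (sf k))"
proof -
  assume r1: "\<rho>1 k < \<eta>1" and r2: "\<eta> \<le> \<rho>2 k"
  have xt: "xt k = x k + \<alpha> k *\<^sub>R sgn (sf k)" using upd_fail r1 r2 by auto
  have "\<eta> \<le> (psi (x k) - psi (x k + \<alpha> k *\<^sub>R sgn (sf k))) / md k (\<alpha> k *\<^sub>R sgn (sf k))"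
    using r2 rho2_def by simp
  hence "\<eta> * md k (\<alpha> k *\<^sub>R sgn (sf k)) \<le> psi (x k) - psi (x k + \<alpha> k *\<^sub>R sgn (sf k))"
    using md_alpha_pos[of k] by (simp add: pos_le_divide_eq)
  then show ?thesis using xt by (simp add: dec_def)
qed

lemma mv3: "\<rho>1 k < \<eta>1 \<Longrightarrow> \<rho>2 k < \<eta> \<Longrightarrow> xt k = x k"
  using upd_fail by auto

lemma dec_nonneg: "0 \<le> dec k"
proof (cases "\<rho>1 k \<ge> \<eta>1")
  case True
  then show ?thesis using mv1[OF True] S1pos[of k] params
    by (smt (verit) mult_pos_pos)
next
  case False
  show ?thesis
  proof (cases "\<eta> \<le> \<rho>2 k")
    case True
    then show ?thesis using mv2[of k] False md_alpha_pos[of k] params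
      by (smt (verit) mult_pos_pos)
  next
    case F2: False
    then show ?thesis using mv3[of k] False by (simp add: dec_def)
  qed
qed

lemma xt_norm: "norm (xt k) \<le> R + DD"
proof -
  have n: "norm (x k) \<le> R" by (rule xk_norm)
  have "xt k = x k + s k \<or> xt k = x k + \<alpha> k *\<^sub>R sgn (sf k) \<or> xt k = x k"
    using mv1 mv2 mv3 by (meson not_le)
  moreover have "norm (s k) \<le> DD" using s_norm[of k] Delta_le[of k] by simp
  moreover have "norm (\<alpha> k *\<^sub>R sgn (sf k)) \<le> DD"
    using alpha_facts(1,2)[of k] sf_norm[of k] Delta_le[of k] v_unit[of k] by simp
  moreover have "0 \<le> DD" using DD_pos by simp
  ultimately show ?thesis using n norm_triangle_ineq[of "x k"] by (smt (verit))
qed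

lemma eps_anti: "i \<le> j \<Longrightarrow> \<epsilon> j \<le> \<epsilon> i"
proof -
  assume "i \<le> j"
  moreover have "decseq \<epsilon>" by (rule decseq_SucI) (use eps_seq(2) in \<open>simp add: less_imp_le\<close>)
  ultimately show ?thesis by (simp add: decseq_def)
qed

definition W :: "nat \<Rightarrow> real" where
  "W k = psi (x k) + Lc * \<kappa> * (\<Sum>i\<le>m. tl_sum \<epsilon> (c k i))"

lemma W_step: "W (Suc k) \<le> W k - dec k"
proof -
  have lip: "\<forall>p\<in>cball 0 (R + DD + real m * \<kappa> * \<epsilon> 0). \<forall>q\<in>cball 0 (R + DD + real m * \<kappa> * \<epsilon> 0).
                 \<bar>psi p - psi q\<bar> \<le> Lc * norm (p - q)"
    using Lc(2) Rb_ge(1) by auto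
  have E: "\<forall>i. \<epsilon> i \<le> \<epsilon> 0" using eps_anti by simp
  have nn: "0 \<le> real (level S m (xt k)) * \<kappa> * \<epsilon> 0" using kappa_pos eps_seq(1) by (simp add: less_imp_le)
  have "psi (x (Suc k)) + Lc * \<kappa> * (\<Sum>i\<le>m. tl_sum \<epsilon> (c (Suc k) i))
      \<le> psi (xt k) + Lc * \<kappa> * (\<Sum>i\<le>m. tl_sum \<epsilon> (c k i))"
    by (rule loop_W[OF trunc eps_seq(1) eps_seq(4) eps_seq(3) E _ lip trunc_step[rule_format]])
       (use Lc(1) xt_norm[of k] nn in auto)
  then show ?thesis by (simp add: W_def dec_def)
qed

lemma W_lower: "\<exists>b. \<forall>k. b \<le> W k"
proof -
  obtain b where b: "\<forall>y. b \<le> psi y" using A1 by (auto simp: bdd_below_def)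
  have "b \<le> W k" for k
  proof -
    have "0 \<le> (\<Sum>i\<le>m. tl_sum \<epsilon> (c k i))" using tl_sum_nonneg[OF eps_seq(3) eps_seq(1)] by (simp add: sum_nonneg)
    hence "0 \<le> Lc * \<kappa> * (\<Sum>i\<le>m. tl_sum \<epsilon> (c k i))" using Lc(1) kappa_pos by simp
    then show ?thesis using b by (simp add: W_def add_increasing2)
  qed
  then show ?thesis by blast
qed

lemma dec_lim: "dec \<longlonglongrightarrow> 0"
proof -
  obtain b where b: "\<forall>k. b \<le> W k" using W_lower by blast
  have ps: "(\<Sum>k<N. dec k) \<le> W 0 - W N" for N
  proof (induction N)
    case 0 then show ?case by simp
  next
    case (Suc N) then show ?case using W_step[of N] by simp
  qed
  have "summable dec"
  proof (rule summableI_nonneg_bounded[of _ "W 0 - b"])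
    fix n show "0 \<le> dec n" by (rule dec_nonneg)
    show "sum dec {..<n} \<le> W 0 - b" using ps[of n] b[rule_format, of n] by linarith
  qed
  then show ?thesis by (rule summable_LIMSEQ_zero)
qed

abbreviation Gm :: "real^'n \<Rightarrow> ereal" where "Gm \<equiv> Gamma_pt psi"
abbreviation lv :: "real^'n \<Rightarrow> nat" where "lv \<equiv> level S m"

lemma lp: "(\<forall>i. c k i \<le> c (Suc k) i) \<and> lv (xt k) \<le> lv (x (Suc k))
   \<and> (\<forall>j. c (Suc k) j \<noteq> c k j \<longrightarrow> j < lv (x (Suc k)))
   \<and> \<not> Gm (x (Suc k)) < ereal (\<epsilon> (c (Suc k) (lv (x (Suc k)))))"
  by (rule loop_props[OF trunc eps_seq(1) eps_seq(4) trunc_step[rule_format]])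

lemma Gam_lb: "1 \<le> k \<Longrightarrow> \<not> Gm (x k) < ereal (\<epsilon> (c k (lv (x k))))"
  using lp[of "k - 1"] by simp

lemma stay: "1 \<le> k \<Longrightarrow> xt k = x k \<Longrightarrow> x (Suc k) = x k"
proof -
  assume k: "1 \<le> k" and e: "xt k = x k"
  have "trunc_loop Gm S m \<epsilon> T (x k) (c k) (x (Suc k)) (c (Suc k))" using trunc_step e by metis
  then show ?thesis
  proof (cases rule: trunc_loop.cases)
    case stop then show ?thesis by simp
  next
    case step then show ?thesis using Gam_lb[OF k] by simp
  qed
qed

lemma c_mono: "k \<le> k' \<Longrightarrow> c k i \<le> c k' i"
proof -
  assume "k \<le> k'"
  moreover have "incseq (\<lambda>k. c k i)" by (rule incseq_SucI) (use lp in blast)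
  ultimately show ?thesis by (simp add: incseq_def)
qed

lemma lv_le: "lv y \<le> m" using level_spec[OF trunc] by blast

lemma Gamma_often: "\<exists>e>0. \<forall>K. \<exists>k\<ge>K. ereal e \<le> Gm (x k)"
proof (rule ccontr)
  assume neg: "\<not> ?thesis"
  have H: "\<forall>e>0. \<exists>K. \<forall>k\<ge>K. Gm (x k) < ereal e"
  proof (intro allI impI)
    fix e :: real assume "0 < e"
    with neg obtain K where "\<forall>k\<ge>K. \<not> ereal e \<le> Gm (x k)" by blast
    then show "\<exists>K. \<forall>k\<ge>K. Gm (x k) < ereal e" by (auto simp: not_le)
  qed
  have claim: "\<exists>N. \<forall>k i. i \<le> m \<longrightarrow> m < i + n \<longrightarrow> c k i \<le> N" for n
  proof (induction n)
    case 0 then show ?case by auto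
  next
    case (Suc n)
    then obtain N where N: "\<forall>k i. i \<le> m \<longrightarrow> m < i + n \<longrightarrow> c k i \<le> N" by blast
    show ?case
    proof (cases "m < n")
      case True
      then show ?thesis using N by (metis add.commute less_imp_le_nat trans_less_add2 le_imp_less_Suc)
    next
      case False
      define j where "j = m - n"
      obtain K where K: "\<forall>k\<ge>K. Gm (x k) < ereal (\<epsilon> N)" using H eps_seq(1) by blast
      define K' where "K' = max K 1"
      have a: "lv (x k) \<le> j" if k: "k \<ge> K'" for k
      proof (rule ccontr)
        assume "\<not> lv (x k) \<le> j"
        hence "m < lv (x k) + n" using False by (simp add: j_def)
        hence "c k (lv (x k)) \<le> N" using N lv_le by blast
        hence "\<epsilon> N \<le> \<epsilon> (c k (lv (x k)))" by (rule eps_anti)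
        moreover have "\<not> Gm (x k) < ereal (\<epsilon> (c k (lv (x k))))" using Gam_lb k by (simp add: K'_def)
        moreover have "Gm (x k) < ereal (\<epsilon> N)" using K k by (simp add: K'_def)
        ultimately show False by (metis ereal_less_eq(3) leI order.strict_trans2)
      qed
      have b: "c (Suc k) j = c k j" if k: "k \<ge> K'" for k
      proof (rule ccontr)
        assume "c (Suc k) j \<noteq> c k j"
        hence "j < lv (x (Suc k))" using lp by blast
        moreover have "lv (x (Suc k)) \<le> j" using a k by simp
        ultimately show False by simp
      qed
      have cc: "c k j \<le> c K' j" for k
      proof (cases "k \<le> K'")
        case True then show ?thesis by (rule c_mono)
      next
        case False
        have "c (K' + t) j = c K' j" for t
          by (induction t) (use b in auto)
        then show ?thesis using False by (metis le_add_diff_inverse nat_le_linear order.refl)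
      qed
      show ?thesis
      proof (intro exI[of _ "max N (c K' j)"] allI impI)
        fix k i assume i: "i \<le> m" "m < i + Suc n"
        show "c k i \<le> max N (c K' j)"
        proof (cases "i = j")
          case True then show ?thesis using cc by (simp add: le_max_iff_disj)
        next
          case False
          hence "m < i + n" using i by (simp add: j_def)
          then show ?thesis using N i by (simp add: le_max_iff_disj)
        qed
      qed
    qed
  qed
  obtain N where N: "\<forall>k i. i \<le> m \<longrightarrow> m < i + Suc m \<longrightarrow> c k i \<le> N" using claim by blast
  obtain K where K: "\<forall>k\<ge>K. Gm (x k) < ereal (\<epsilon> N)" using H eps_seq(1) by blast
  define k where "k = max K 1"
  have "c k (lv (x k)) \<le> N" using N lv_le by simp
  hence "\<epsilon> N \<le> \<epsilon> (c k (lv (x k)))" by (rule eps_anti)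
  moreover have "\<not> Gm (x k) < ereal (\<epsilon> (c k (lv (x k))))" using Gam_lb by (simp add: k_def)
  moreover have "Gm (x k) < ereal (\<epsilon> N)" using K by (simp add: k_def)
  ultimately show False by (metis ereal_less_eq(3) leI order.strict_trans2)
qed
lemma subseq_choose:
  assumes "\<forall>n N. \<exists>k\<ge>N. Q n k"
  shows "\<exists>r::nat\<Rightarrow>nat. strict_mono r \<and> (\<forall>n. Q n (r n))"
proof -
  obtain h where h: "\<And>n N. h n N \<ge> N \<and> Q n (h n N)" using assms by metis
  define r where "r = rec_nat (h 0 0) (\<lambda>n rn. h (Suc n) (Suc rn))"
  have r0: "r 0 = h 0 0" and rS: "\<And>n. r (Suc n) = h (Suc n) (Suc (r n))" by (simp_all add: r_def)
  have "strict_mono r"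
    by (rule strict_monoI_Suc) (metis rS h Suc_le_lessD)
  moreover have "Q n (r n)" for n by (cases n) (simp_all add: r0 rS h)
  ultimately show ?thesis by blast
qed

context
  fixes ep :: real and K0 :: nat
  assumes ep: "0 < ep" and gK: "\<forall>k\<ge>K0. ep \<le> norm (g k)"
begin

definition c0 :: real where "c0 = min (ep/2) (\<gamma>1 * ep / 4)"
definition mu :: real where "mu = (1 - \<eta>2) * c0 / 4"
definition Dt :: real where
  "Dt = min (min (\<gamma>2 * ep) (ep / Kq)) (min (2 * mu / Kq) (ep * mu^2 / (2 * Kq * Lc^2)))"

lemma c0_pos: "0 < c0" using ep params by (simp add: c0_def)
lemma mu_pos: "0 < mu" using c0_pos params by (simp add: mu_def)
lemma Dt_pos: "0 < Dt" using ep params mu_pos Kq_pos Lc(1) by (simp add: Dt_def)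

lemma KE:
  assumes k: "k \<ge> K0" and D: "\<Delta> k \<le> Dt"
    and hh: "\<bar>psi (x k + \<alpha> k *\<^sub>R sgn (sf k)) - psi (x k) - \<alpha> k * dir_deriv psi (x k) (sgn (sf k))\<bar>
             \<le> mu * \<alpha> k"
  shows "\<eta>2 < \<rho>2 k"
proof -
  define v where "v = sgn (sf k)"
  define a where "a = \<alpha> k"
  define dk where "dk = d (x k)"
  define U where "U = - u (x k)"
  define p where "p = dk \<bullet> v"
  have U: "norm (g k) = U" "g k = (- U) *\<^sub>R dk" "ep \<le> U" "0 < U" "norm dk = 1"
    "dir_deriv psi (x k) dk \<le> - U"
    using gk_facts[of k] gK k by (auto simp: U_def dk_def)
  have vn: "norm v = 1" using v_unit by (simp add: v_def)
  have a: "0 < a" "a \<le> \<Delta> k" using alpha_facts(1,2)[of k] sf_norm[of k] by (auto simp: a_def)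
  have Dpos: "0 < \<Delta> k" by (rule Delta_pos)
  have D1: "\<Delta> k \<le> \<gamma>2 * ep" "\<Delta> k \<le> ep / Kq" "\<Delta> k \<le> 2 * mu / Kq" "\<Delta> k \<le> ep * mu^2 / (2 * Kq * Lc^2)"
    using D by (auto simp: Dt_def)
  have p1: "p \<le> 1" using Cauchy_Schwarz_ineq2[of dk v] U vn by (simp add: p_def)
  \<comment> \<open>denominator lower bound\<close>
  have den: "md k (a *\<^sub>R v) \<ge> c0 * a"
  proof (cases "sf k = sC k")
    case True
    have a': "0 < a" "a \<le> norm (sC k)" using alpha_facts(1,2)[of k] True by (auto simp: a_def)
    have "md k (a *\<^sub>R v) \<ge> a * U / 2" using C_small[OF a'] True sgn_sC by (simp add: v_def U_def)
    moreover have "a * ep / 2 \<le> a * U / 2" using a U by (simp add: mult_left_mono)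
    moreover have "c0 * a \<le> a * ep / 2" using a by (simp add: c0_def)
    ultimately show ?thesis by linarith
  next
    case False
    then have sfs: "sf k = s k" and ms: "md k (a *\<^sub>R v) \<ge> a / (2 * norm (s k)) * md k (s k)"
      using sf_facts[of k] by (auto simp: a_def v_def)
    have mn: "min (\<Delta> k) (\<gamma>2 * norm (g k)) = \<Delta> k"
    proof -
      have "\<gamma>2 * ep \<le> \<gamma>2 * norm (g k)" using U params by simp
      then show ?thesis using D1 by simp
    qed
    have ms2: "md k (s k) \<ge> \<gamma>1 / 2 * U * \<Delta> k" using S1[of k] mn U by simp
    have sn: "0 < norm (s k)" "norm (s k) \<le> \<Delta> k" using s_nz s_norm by auto
    have "a / (2 * norm (s k)) * md k (s k) \<ge> a / (2 * norm (s k)) * (\<gamma>1 / 2 * U * \<Delta> k)"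
      using ms2 a sn by (intro mult_left_mono) auto
    moreover have "a / (2 * norm (s k)) * (\<gamma>1 / 2 * U * \<Delta> k) \<ge> a / (2 * \<Delta> k) * (\<gamma>1 / 2 * U * \<Delta> k)"
      using a sn U params Dpos by (intro mult_right_mono divide_left_mono) auto
    moreover have "a / (2 * \<Delta> k) * (\<gamma>1 / 2 * U * \<Delta> k) = a * \<gamma>1 * U / 4" using Dpos by simp
    moreover have "a * \<gamma>1 * U / 4 \<ge> a * \<gamma>1 * ep / 4" using a U params by simp
    moreover have "c0 * a \<le> a * \<gamma>1 * ep / 4" using a by (simp add: c0_def)
    ultimately show ?thesis using ms by linarith
  qed
  \<comment> \<open>direction close to d\<close>
  have vd: "Lc * norm (v - dk) \<le> mu"
  proof (cases "sf k = sC k")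
    case True
    then have "v = dk" using sgn_sC by (simp add: v_def dk_def)
    then show ?thesis using mu_pos by simp
  next
    case False
    then have sfs: "sf k = s k" using sf_facts[of k] by auto
    have sn: "0 < norm (s k)" "norm (s k) \<le> \<Delta> k" using s_nz s_norm by auto
    have sv: "s k = norm (s k) *\<^sub>R v" using sfs s_nz[of k] by (simp add: v_def sgn_div_norm)
    have m1: "md k (s k) \<ge> \<Delta> k * U - Kq * (\<Delta> k)^2 / 2"
      using S2[of k] C_dec[of "\<Delta> k" k] Dpos by (simp add: U_def)
    have ds: "dk \<bullet> s k = norm (s k) * p"
    proof -
      have "dk \<bullet> s k = dk \<bullet> (norm (s k) *\<^sub>R v)" by (rule arg_cong[OF sv])
      then show ?thesis by (simp add: p_def)
    qed
    have gs: "- (g k \<bullet> s k) = U * norm (s k) * p"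
      using U(2) ds by simp
    have "- (1/2 * (s k \<bullet> (B k *v s k))) \<le> Kq * (norm (s k))^2 / 2" using quadB[of "s k" k] by linarith
    also have "\<dots> \<le> Kq * (\<Delta> k)^2 / 2" using sn Kq_pos by (simp add: power_mono)
    finally have m2: "md k (s k) \<le> U * norm (s k) * p + Kq * (\<Delta> k)^2 / 2" using gs by (simp add: md_eq)
    have key: "U * norm (s k) * p \<ge> \<Delta> k * U - Kq * (\<Delta> k)^2" using m1 m2 by linarith
    have KD: "Kq * \<Delta> k \<le> ep" using D1(2) Kq_pos by (simp add: pos_le_divide_eq mult.commute)
    have p0: "0 \<le> p"
    proof (rule ccontr)
      assume "\<not> 0 \<le> p"
      hence "p < 0" by simp
      have "0 < U * norm (s k)" by (rule mult_pos_pos) (use U sn in auto)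
      hence "U * norm (s k) * p < 0" using \<open>p < 0\<close> by (rule mult_pos_neg)
      hence "\<Delta> k * U < Kq * (\<Delta> k)^2" using key by linarith
      moreover have "Kq * (\<Delta> k)^2 = \<Delta> k * (Kq * \<Delta> k)" by (simp add: power2_eq_square)
      ultimately have "\<Delta> k * U < \<Delta> k * (Kq * \<Delta> k)" by simp
      hence "U < Kq * \<Delta> k" using mult_less_cancel_left_pos[OF Dpos] by blast
      thus False using KD U by simp
    qed
    have "U * norm (s k) \<le> U * \<Delta> k" by (rule mult_left_mono) (use U sn in auto)
    hence "U * norm (s k) * p \<le> U * \<Delta> k * p" using p0 by (rule mult_right_mono)
    moreover have "\<Delta> k * (U * (1 - p)) = \<Delta> k * U - U * \<Delta> k * p" by (simp add: algebra_simps)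
    moreover have "Kq * (\<Delta> k)^2 = \<Delta> k * (Kq * \<Delta> k)" by (simp add: power2_eq_square)
    ultimately have "\<Delta> k * (U * (1 - p)) \<le> \<Delta> k * (Kq * \<Delta> k)" using key by linarith
    hence "U * (1 - p) \<le> Kq * \<Delta> k" using Dpos by (rule mult_left_le_imp_le)
    moreover have "ep * (1 - p) \<le> U * (1 - p)" using U p1 by (simp add: mult_right_mono)
    ultimately have e1: "ep * (1 - p) \<le> Kq * \<Delta> k" by linarith
    have nd: "(norm (v - dk))^2 = 2 * (1 - p)"
    proof -
      have vv: "v \<bullet> v = 1" "dk \<bullet> dk = 1" using vn U by (simp_all add: dot_square_norm)
      show ?thesis using vv by (simp add: power2_norm_eq_inner inner_diff_left inner_diff_right p_def inner_commute)
    qed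
    have "Kq * \<Delta> k \<le> Kq * (ep * mu^2 / (2 * Kq * Lc^2))" by (rule mult_left_mono) (use D1(4) Kq_pos in auto)
    also have "\<dots> = ep * mu^2 / (2 * Lc^2)" using Kq_pos by simp
    finally have "Kq * \<Delta> k \<le> ep * mu^2 / (2 * Lc^2)" .
    moreover have "ep * mu^2 / (2 * Lc^2) = ep * (mu^2 / (2 * Lc^2))" by simp
    ultimately have "ep * (1 - p) \<le> ep * (mu^2 / (2 * Lc^2))" using e1 by linarith
    hence "1 - p \<le> mu^2 / (2 * Lc^2)" using ep by (rule mult_left_le_imp_le)
    moreover have L2: "0 < 2 * Lc^2" using Lc(1) by simp
    ultimately have f1: "(1 - p) * (2 * Lc^2) \<le> mu^2" by (simp only: pos_le_divide_eq)
    have "(Lc * norm (v - dk))^2 = Lc^2 * (norm (v - dk))^2" by (rule power_mult_distrib)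
    also have "\<dots> = (1 - p) * (2 * Lc^2)" using nd by simp
    finally have "(Lc * norm (v - dk))^2 \<le> mu^2" using f1 by simp
    then show ?thesis by (rule power2_le_imp_le) (use mu_pos in simp)
  qed
  have dd1: "dir_deriv psi (x k) v - g k \<bullet> v \<le> Lc * norm (v - dk)"
  proof -
    have "\<bar>dir_deriv psi (x k) v - dir_deriv psi (x k) dk\<bar> \<le> Lc * norm (v - dk)"
      by (rule dd_lipschitz[OF xk_norm]) (use vn U in auto)
    moreover have "g k \<bullet> v = - U * p" using U(2) by (simp add: p_def)
    moreover have "- U \<le> - U * p" using U p1 by (simp add: mult_le_cancel_left1)
    ultimately show ?thesis using U(6) by linarith
  qed
  define num where "num = psi (x k) - psi (x k + a *\<^sub>R v)"
  define den where "den = md k (a *\<^sub>R v)"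
  define h where "h = psi (x k + a *\<^sub>R v) - psi (x k) - a * dir_deriv psi (x k) v"
  have hb: "\<bar>h\<bar> \<le> mu * a" using hh by (simp add: h_def a_def v_def)
  have deq: "den = a * (- (g k \<bullet> v)) - a^2/2 * (v \<bullet> (B k *v v))" by (simp add: den_def md_scale)
  have neq: "num = - (a * dir_deriv psi (x k) v) - h" by (simp add: num_def h_def)
  have A1: "a * (dir_deriv psi (x k) v - g k \<bullet> v) \<le> a * mu"
    using dd1 vd a by (intro mult_left_mono) auto
  have A3: "a^2/2 * (v \<bullet> (B k *v v)) \<ge> - (a * mu)"
  proof -
    have "\<bar>v \<bullet> (B k *v v)\<bar> \<le> Kq" using quadB[of v k] vn by simp
    hence "- Kq \<le> v \<bullet> (B k *v v)" by linarith
    hence "a^2/2 * (- Kq) \<le> a^2/2 * (v \<bullet> (B k *v v))" by (intro mult_left_mono) auto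
    moreover have "a * Kq \<le> 2 * mu"
    proof -
      have "a * Kq \<le> \<Delta> k * Kq" using a Kq_pos by (simp add: mult_right_mono)
      also have "\<dots> \<le> 2 * mu" using D1(3) Kq_pos by (simp add: pos_le_divide_eq)
      finally show ?thesis .
    qed
    hence "a * (a * Kq) \<le> a * (2 * mu)" using a by (simp add: mult_left_mono)
    hence "a^2/2 * Kq \<le> a * mu" by (simp add: power2_eq_square algebra_simps)
    ultimately show ?thesis by simp
  qed
  have A4: "(1 - \<eta>2) * den \<ge> (1 - \<eta>2) * (c0 * a)" using den params by (simp add: den_def mult_left_mono)
  have c0mu: "(1 - \<eta>2) * (c0 * a) = 4 * mu * a" by (simp add: mu_def)
  have "num - \<eta>2 * den \<ge> mu * a"
  proof -
    have "num - den = - a * dir_deriv psi (x k) v + a * (g k \<bullet> v) - h + a^2/2 * (v \<bullet> (B k *v v))"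
      using deq neq by (simp add: algebra_simps)
    also have "- a * dir_deriv psi (x k) v + a * (g k \<bullet> v) = - (a * (dir_deriv psi (x k) v - g k \<bullet> v))"
      by (simp add: algebra_simps)
    finally have "num - den \<ge> - (a * mu) - mu * a - a * mu" using A1 A3 hb by linarith
    moreover have "num - \<eta>2 * den = (1 - \<eta>2) * den + (num - den)" by (simp add: algebra_simps)
    ultimately show ?thesis using A4 c0mu by (simp add: algebra_simps)
  qed
  moreover have "0 < mu * a" using mu_pos a by simp
  moreover have dpos: "0 < den" using md_alpha_pos[of k] by (simp add: den_def a_def v_def)
  ultimately have "\<eta>2 * den < num" by linarith
  hence "\<eta>2 < num / den" using dpos by (simp add: pos_less_divide_eq)
  then show ?thesis using rho2_def by (simp add: num_def den_def a_def v_def)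
qed

lemma M1: "\<exists>Dt'>0. \<exists>K1. \<forall>k\<ge>K1. \<Delta> k < Dt' \<longrightarrow> \<eta>2 < \<rho>2 k"
proof (rule ccontr)
  assume neg: "\<not> ?thesis"
  have Q: "\<forall>n N. \<exists>k\<ge>N. \<Delta> k < inverse (real (Suc n)) \<and> \<rho>2 k \<le> \<eta>2"
  proof (intro allI)
    fix n N :: nat
    have i0: "0 < inverse (real (Suc n))" by simp
    from neg have "\<forall>Dt'>0. \<forall>K1. \<exists>k\<ge>K1. \<Delta> k < Dt' \<and> \<not> \<eta>2 < \<rho>2 k" by blast
    then show "\<exists>k\<ge>N. \<Delta> k < inverse (real (Suc n)) \<and> \<rho>2 k \<le> \<eta>2" using i0 by (meson not_less)
  qed
  obtain r where r: "strict_mono r" "\<forall>n. \<Delta> (r n) < inverse (real (Suc n)) \<and> \<rho>2 (r n) \<le> \<eta>2"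
    using subseq_choose[OF Q] by blast
  have "\<forall>n. (x \<circ> r) n \<in> cball 0 R" using xk_norm by simp
  then obtain l q where q: "strict_mono q" "((x \<circ> r) \<circ> q) \<longlonglongrightarrow> l"
    using seq_compactE[OF compact_imp_seq_compact[OF compact_cball]] by metis
  define r' where "r' = r \<circ> q"
  have sm: "strict_mono r'" using r(1) q(1) by (simp add: r'_def strict_mono_o)
  have cv: "convergent (\<lambda>l. x (r' l))" using q(2) by (auto simp: r'_def convergent_def o_def)
  have le: "l \<le> r' l" for l using seq_suble[OF sm] by simp
  have Dsm: "\<Delta> (r' l) < inverse (real (Suc l))" for l
  proof -
    have "l \<le> q l" using seq_suble[OF q(1)] by simp
    hence i: "inverse (real (Suc (q l))) \<le> inverse (real (Suc l))" by (simp add: le_imp_inverse_le)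
    have "\<Delta> (r (q l)) < inverse (real (Suc (q l)))" using r(2) by blast
    then show ?thesis unfolding r'_def o_def by (rule less_le_trans[OF _ i])
  qed
  have al: "(\<lambda>l. \<alpha> (r' l)) \<longlonglongrightarrow> 0"
  proof (rule tendsto_sandwich[of "\<lambda>_. 0" _ sequentially "\<lambda>l. inverse (real (Suc l))"])
    show "\<forall>\<^sub>F l in sequentially. 0 \<le> \<alpha> (r' l)" using alpha_facts(1) by (simp add: less_imp_le)
    show "\<forall>\<^sub>F l in sequentially. \<alpha> (r' l) \<le> inverse (real (Suc l))"
    proof (rule always_eventually, rule allI)
      fix l
      have "\<alpha> (r' l) \<le> \<Delta> (r' l)" using alpha_facts(2) sf_norm order_trans by blast
      then show "\<alpha> (r' l) \<le> inverse (real (Suc l))" using Dsm[of l] by simp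
    qed
    show "(\<lambda>_. 0) \<longlonglongrightarrow> (0::real)" by simp
    show "(\<lambda>l. inverse (real (Suc l))) \<longlonglongrightarrow> 0" by (rule LIMSEQ_inverse_real_of_nat)
  qed
  have o: "(\<lambda>l. psi (x (r' l) + \<alpha> (r' l) *\<^sub>R sgn (sf (r' l))) - psi (x (r' l))
                 - \<alpha> (r' l) * dir_deriv psi (x (r' l)) (sgn (sf (r' l)))) \<in> o(\<lambda>l. \<alpha> (r' l))"
    using B3 sm cv al by blast
  have ev1: "eventually (\<lambda>l. norm (psi (x (r' l) + \<alpha> (r' l) *\<^sub>R sgn (sf (r' l))) - psi (x (r' l))
                 - \<alpha> (r' l) * dir_deriv psi (x (r' l)) (sgn (sf (r' l)))) \<le> mu * norm (\<alpha> (r' l))) at_top"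
    by (rule landau_o.smallD[OF o mu_pos])
  have ev2: "eventually (\<lambda>l. K0 \<le> r' l) at_top"
    unfolding eventually_at_top_linorder using le order_trans by blast
  have ev3: "eventually (\<lambda>l. inverse (real (Suc l)) < Dt) sequentially"
    by (rule order_tendstoD(2)[OF LIMSEQ_inverse_real_of_nat Dt_pos])
  have "eventually (\<lambda>l. (norm (psi (x (r' l) + \<alpha> (r' l) *\<^sub>R sgn (sf (r' l))) - psi (x (r' l))
                 - \<alpha> (r' l) * dir_deriv psi (x (r' l)) (sgn (sf (r' l)))) \<le> mu * norm (\<alpha> (r' l)))
        \<and> K0 \<le> r' l \<and> inverse (real (Suc l)) < Dt) sequentially"
    using ev1 ev2 ev3 by eventually_elim auto
  then obtain l where l: "norm (psi (x (r' l) + \<alpha> (r' l) *\<^sub>R sgn (sf (r' l))) - psi (x (r' l))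
                 - \<alpha> (r' l) * dir_deriv psi (x (r' l)) (sgn (sf (r' l)))) \<le> mu * norm (\<alpha> (r' l))"
        "K0 \<le> r' l" "inverse (real (Suc l)) < Dt"
    unfolding eventually_sequentially by blast
  have "\<Delta> (r' l) \<le> Dt" using Dsm[of l] l(3) by simp
  moreover have "\<bar>psi (x (r' l) + \<alpha> (r' l) *\<^sub>R sgn (sf (r' l))) - psi (x (r' l))
                 - \<alpha> (r' l) * dir_deriv psi (x (r' l)) (sgn (sf (r' l)))\<bar> \<le> mu * \<alpha> (r' l)"
    using l(1) alpha_facts(1)[of "r' l"] by simp
  ultimately have "\<eta>2 < \<rho>2 (r' l)" using KE l(2) by blast
  moreover have "\<rho>2 (r' l) \<le> \<eta>2" using r(2) by (simp add: r'_def)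
  ultimately show False by simp
qed

lemma M2: "\<exists>Dh>0. \<exists>K2. \<forall>k\<ge>K2. Dh \<le> \<Delta> k"
proof -
  obtain Dt' K1 where D: "0 < Dt'" "\<forall>k\<ge>K1. \<Delta> k < Dt' \<longrightarrow> \<eta>2 < \<rho>2 k" using M1 by blast
  define Dh where "Dh = min (\<Delta> K1) (min (r1 * Dt') \<Delta>max)"
  have Dh0: "0 < Dh" using D Delta_pos params by (simp add: Dh_def)
  have "Dh \<le> \<Delta> k" if "K1 \<le> k" for k
    using that
  proof (induction k rule: nat_induct_at_least)
    case base then show ?case by (simp add: Dh_def)
  next
    case (Suc k)
    have Dk: "0 < \<Delta> k" by (rule Delta_pos)
    have r2D: "\<Delta> k \<le> r2 * \<Delta> k" using Dk params by simp
    have mm: "Dh \<le> min \<Delta>max (r2 * \<Delta> k)" using Suc.IH r2D by (simp add: Dh_def)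
    show ?case
    proof (cases "\<rho>1 k \<ge> \<eta>1")
      case True
      then have "\<Delta> (Suc k) = (if \<rho>1 k > \<eta>2 then min \<Delta>max (r2 * \<Delta> k) else \<Delta> k)" using upd_succ by blast
      then show ?thesis using mm Suc.IH by auto
    next
      case False
      then have e: "\<Delta> (Suc k) = (if \<rho>2 k < \<eta>1 then r1 * \<Delta> k
                        else if \<rho>2 k > \<eta>2 then min \<Delta>max (r2 * \<Delta> k) else \<Delta> k)" using upd_fail by auto
      show ?thesis
      proof (cases "\<rho>2 k < \<eta>1")
        case True
        have "\<not> \<Delta> k < Dt'" using D(2) Suc.hyps True params by force
        hence "r1 * Dt' \<le> r1 * \<Delta> k" using params by simp
        then show ?thesis using e True by (simp add: Dh_def)
      next
        case False
        then show ?thesis using e mm Suc.IH by auto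
      qed
    qed
  qed
  then show ?thesis using Dh0 by blast
qed

lemma md_s_lb:
  assumes "ep \<le> norm (g k)" "Dh \<le> \<Delta> k" "0 < Dh"
  shows "md k (s k) \<ge> \<gamma>1 / 2 * ep * min Dh (\<gamma>2 * ep)"
proof -
  have "\<gamma>2 * ep \<le> \<gamma>2 * norm (g k)" using assms params by simp
  hence f1: "min Dh (\<gamma>2 * ep) \<le> min (\<Delta> k) (\<gamma>2 * norm (g k))" using assms by (intro min.mono)
  have f2: "\<gamma>1 / 2 * ep \<le> \<gamma>1 / 2 * norm (g k)" using assms params by simp
  have f3: "0 \<le> min Dh (\<gamma>2 * ep)" using assms params ep by simp
  have f4: "0 \<le> \<gamma>1 / 2 * norm (g k)" using params by simp
  have "\<gamma>1 / 2 * ep * min Dh (\<gamma>2 * ep) \<le> \<gamma>1 / 2 * norm (g k) * min (\<Delta> k) (\<gamma>2 * norm (g k))"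
    by (rule mult_mono[OF f2 f1 f4 f3])
  then show ?thesis using S1[of k] by linarith
qed

lemma M3: "\<exists>Dh>0. \<exists>K2. (\<forall>k\<ge>K2. Dh \<le> \<Delta> k) \<and> (\<forall>k\<ge>K2. \<rho>1 k < \<eta>1)"
proof -
  obtain Dh K2 where D: "0 < Dh" "\<forall>k\<ge>K2. Dh \<le> \<Delta> k" using M2 by blast
  define th where "th = \<eta>1 * (\<gamma>1 / 2 * ep * min Dh (\<gamma>2 * ep))"
  have th0: "0 < th" using D ep params by (simp add: th_def)
  have "eventually (\<lambda>k. dec k < th) sequentially" by (rule order_tendstoD(2)[OF dec_lim th0])
  then obtain N where N: "\<forall>k\<ge>N. dec k < th" unfolding eventually_sequentially by blast
  have "\<rho>1 k < \<eta>1" if k: "k \<ge> max (max K0 K2) N" for k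
  proof (rule ccontr)
    assume "\<not> \<rho>1 k < \<eta>1"
    hence "dec k \<ge> \<eta>1 * md k (s k)" using mv1 by simp
    moreover have "md k (s k) \<ge> \<gamma>1 / 2 * ep * min Dh (\<gamma>2 * ep)"
      by (rule md_s_lb) (use gK D k in auto)
    ultimately have "dec k \<ge> th" using params by (smt (verit) mult_left_mono th_def)
    then show False using N k by force
  qed
  then show ?thesis using D by (intro exI[of _ Dh] conjI exI[of _ "max (max K0 K2) N"]) auto
qed

lemma M4:
  assumes Dh: "0 < Dh" "\<forall>k\<ge>K2. Dh \<le> \<Delta> k" and K3: "\<forall>k\<ge>K2. \<rho>1 k < \<eta>1" and e: "0 < e"
  shows "\<exists>K4. \<forall>k\<ge>K4. \<eta> \<le> \<rho>2 k \<longrightarrow> Gm (x k) < ereal e"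
proof -
  obtain e' where e': "0 < e'" "\<forall>k. ereal e \<le> Gm (x k) \<longrightarrow> ereal e' \<le> Gs (x k) (sgn (sf k))"
    using B4 e by blast
  define th where "th = \<gamma>1 / 2 * ep * min Dh (\<gamma>2 * ep)"
  have th0: "0 < th" using Dh ep params by (simp add: th_def)
  define tau where "tau = min Dh (ep / Kq)"
  have tau0: "0 < tau" using Dh ep Kq_pos by (simp add: tau_def)
  define th' where "th' = tau * ep / 2"
  have th'0: "0 < th'" using tau0 ep by (simp add: th'_def)
  define sig where "sig = min (min 1 (th / (Lc + Kq))) (min 1 (th' / (Lc + Kq)))"
  have LK: "0 < Lc + Kq" using Lc(1) Kq_pos by simp
  have sig0: "0 < sig" using th0 th'0 LK by (simp add: sig_def)
  define c1 where "c1 = min (ep / 2) (th / (2 * DD))"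
  have c10: "0 < c1" using ep th0 DD_pos by (simp add: c1_def)
  define th2 where "th2 = \<eta> * (c1 * min e' sig)"
  have th20: "0 < th2" using params c10 e' sig0 by (simp add: th2_def)
  have "eventually (\<lambda>k. dec k < th2) sequentially" by (rule order_tendstoD(2)[OF dec_lim th20])
  then obtain N where N: "\<forall>k\<ge>N. dec k < th2" unfolding eventually_sequentially by blast
  have "Gm (x k) < ereal e" if k: "k \<ge> max (max K0 K2) N" and r: "\<eta> \<le> \<rho>2 k" for k
  proof (rule ccontr)
    assume "\<not> Gm (x k) < ereal e"
    hence "ereal e \<le> Gm (x k)" by simp
    hence Ge: "ereal e' \<le> Gs (x k) (sgn (sf k))" using e' by blast
    have gk: "ep \<le> norm (g k)" using gK k by simp
    have Dk: "Dh \<le> \<Delta> k" using Dh k by simp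
    have r1: "\<rho>1 k < \<eta>1" using K3 k by simp
    have U: "norm (g k) = - u (x k)" using gk_facts[of k] by blast
    have mds: "md k (s k) \<ge> th" unfolding th_def by (rule md_s_lb[OF gk Dk Dh(1)])
    have a0: "0 < \<alpha> k" using alpha_facts by simp
    \<comment> \<open>lower bound for the step norm\<close>
    have sfn: "norm (sf k) \<ge> sig"
    proof (cases "sf k = sC k")
      case True
      have t: "0 \<le> tau" "tau \<le> \<Delta> k" using tau0 Dk by (auto simp: tau_def)
      have "md k (sC k) \<ge> tau * (- u (x k)) - Kq * tau^2 / 2" by (rule C_dec[OF t])
      moreover have "Kq * tau \<le> ep" using Kq_pos by (simp add: tau_def min_def pos_le_divide_eq mult.commute split: if_splits)
      hence "Kq * tau^2 / 2 \<le> tau * ep / 2" using tau0 by (simp add: power2_eq_square mult_left_mono algebra_simps)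
      moreover have "tau * ep \<le> tau * (- u (x k))" by (rule mult_left_mono) (use gk U tau0 in auto)
      ultimately have "md k (sC k) \<ge> th'" by (simp add: th'_def)
      hence "norm (sC k) \<ge> min 1 (th' / (Lc + Kq))" using norm_lower th'0 by blast
      then show ?thesis using True by (simp add: sig_def)
    next
      case False
      hence "sf k = s k" using sf_facts[of k] by auto
      moreover have "norm (s k) \<ge> min 1 (th / (Lc + Kq))" using norm_lower mds th0 by blast
      ultimately show ?thesis by (simp add: sig_def)
    qed
    have am: "\<alpha> k \<ge> min e' sig"
    proof -
      have "min e' (norm (sf k)) \<le> \<alpha> k" using alpha_facts(3)[OF Ge] .
      moreover have "min e' sig \<le> min e' (norm (sf k))" using sfn by simp
      ultimately show ?thesis by linarith
    qed
    \<comment> \<open>lower bound for model decrease\<close>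
    have mda: "md k (\<alpha> k *\<^sub>R sgn (sf k)) \<ge> c1 * \<alpha> k"
    proof (cases "sf k = sC k")
      case True
      have a': "0 < \<alpha> k" "\<alpha> k \<le> norm (sC k)" using alpha_facts(1,2)[of k] True by auto
      have "md k (\<alpha> k *\<^sub>R sgn (sf k)) \<ge> \<alpha> k * (- u (x k)) / 2" using C_small[OF a'] True sgn_sC by simp
      moreover have "\<alpha> k * ep \<le> \<alpha> k * (- u (x k))" by (rule mult_left_mono) (use a0 gk U in auto)
      hence "\<alpha> k * ep / 2 \<le> \<alpha> k * (- u (x k)) / 2" by simp
      moreover have "c1 * \<alpha> k \<le> \<alpha> k * ep / 2" using a0 by (simp add: c1_def)
      ultimately show ?thesis by linarith
    next
      case False
      then have sfs: "sf k = s k" and ms: "md k (\<alpha> k *\<^sub>R sgn (sf k)) \<ge> \<alpha> k / (2 * norm (s k)) * md k (s k)"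
        using sf_facts[of k] by auto
      have sn: "0 < norm (s k)" "norm (s k) \<le> DD" using s_nz s_norm[of k] Delta_le[of k] by auto
      have "\<alpha> k / (2 * norm (s k)) * md k (s k) \<ge> \<alpha> k / (2 * norm (s k)) * th"
        using mds a0 sn by (intro mult_left_mono) auto
      moreover have "\<alpha> k / (2 * norm (s k)) * th \<ge> \<alpha> k / (2 * DD) * th"
        using a0 sn th0 DD_pos by (intro mult_right_mono divide_left_mono) auto
      moreover have "\<alpha> k / (2 * DD) * th = \<alpha> k * (th / (2 * DD))" by simp
      moreover have "c1 * \<alpha> k \<le> \<alpha> k * (th / (2 * DD))"
      proof -
        have "c1 \<le> th / (2 * DD)" by (simp add: c1_def)
        hence "c1 * \<alpha> k \<le> th / (2 * DD) * \<alpha> k" by (rule mult_right_mono) (use a0 in simp)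
        then show ?thesis by (metis mult.commute)
      qed
      ultimately show ?thesis using ms by linarith
    qed
    have "dec k \<ge> \<eta> * md k (\<alpha> k *\<^sub>R sgn (sf k))" using mv2[OF r1 r] by simp
    moreover have "\<eta> * md k (\<alpha> k *\<^sub>R sgn (sf k)) \<ge> \<eta> * (c1 * \<alpha> k)" using mda params by simp
    moreover have "c1 * \<alpha> k \<ge> c1 * min e' sig" using am c10 by simp
    hence "\<eta> * (c1 * \<alpha> k) \<ge> th2" using params by (simp add: th2_def)
    ultimately have "dec k \<ge> th2" by linarith
    then show False using N k by force
  qed
  then show ?thesis by blast
qed

lemma no_eps: False
proof -
  obtain Dh K2 where D: "0 < Dh" "\<forall>k\<ge>K2. Dh \<le> \<Delta> k" "\<forall>k\<ge>K2. \<rho>1 k < \<eta>1" using M3 by blast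
  obtain e where e: "0 < e" "\<forall>K. \<exists>k\<ge>K. ereal e \<le> Gm (x k)" using Gamma_often by blast
  obtain K4 where K4: "\<forall>k\<ge>K4. \<eta> \<le> \<rho>2 k \<longrightarrow> Gm (x k) < ereal e" using M4[OF D(1,2) D(3) e(1)] by blast
  define K5 where "K5 = max K4 (max K2 1)"
  have small: "Gm (x k) < ereal e" if k: "k \<ge> K5" for k
  proof (rule ccontr)
    assume "\<not> Gm (x k) < ereal e"
    hence ge: "ereal e \<le> Gm (x k)" by simp
    have P: "x (k + j) = x k \<and> \<Delta> (k + j) = r1^j * \<Delta> k" for j
    proof (induction j)
      case 0 then show ?case by simp
    next
      case (Suc j)
      define k' where "k' = k + j"
      have k': "k' \<ge> K5" using k by (simp add: k'_def)
      have xk': "x k' = x k" "\<Delta> k' = r1^j * \<Delta> k" using Suc by (simp_all add: k'_def)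
      have "\<not> \<eta> \<le> \<rho>2 k'" using K4 k' ge xk' by (force simp: K5_def)
      hence r2: "\<rho>2 k' < \<eta>" by simp
      have r1: "\<rho>1 k' < \<eta>1" using D(3) k' by (simp add: K5_def)
      have xt: "xt k' = x k'" by (rule mv3[OF r1 r2])
      have "\<Delta> (Suc k') = r1 * \<Delta> k'" using upd_fail r1 r2 params by auto
      moreover have "x (Suc k') = x k'" using stay[OF _ xt] k' by (simp add: K5_def)
      ultimately show ?case using xk' by (simp add: k'_def)
    qed
    have Dk: "0 < \<Delta> k" by (rule Delta_pos)
    obtain j where j: "r1^j < Dh / \<Delta> k" using real_arch_pow_inv[of "Dh / \<Delta> k" r1] D(1) Dk params by auto
    have "\<Delta> (k + j) < Dh" using P[of j] j Dk by (simp add: pos_less_divide_eq)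
    moreover have "Dh \<le> \<Delta> (k + j)" using D(2) k by (simp add: K5_def)
    ultimately show False by simp
  qed
  obtain k where "k \<ge> K5" "ereal e \<le> Gm (x k)" using e(2) by blast
  then show False using small by (meson not_le)
qed

end

lemma main: "liminf (\<lambda>k. ereal (norm (g k))) = 0"
proof (rule ccontr)
  assume ne: "liminf (\<lambda>k. ereal (norm (g k))) \<noteq> 0"
  have "0 \<le> liminf (\<lambda>k. ereal (norm (g k)))" by (rule Liminf_bounded) simp
  hence "0 < liminf (\<lambda>k. ereal (norm (g k)))" using ne by simp
  then obtain z where z: "0 < ereal z" "ereal z < liminf (\<lambda>k. ereal (norm (g k)))"
    using ereal_dense2 by blast
  have "eventually (\<lambda>k. ereal z < ereal (norm (g k))) sequentially" by (rule less_LiminfD[OF z(2)])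
  then obtain K0 where K0: "\<forall>k\<ge>K0. z \<le> norm (g k)" unfolding eventually_sequentially by (auto intro: less_imp_le)
  have "0 < z" using z(1) by simp
  from no_eps[OF this K0] show False .
qed

end

theorem theorem4p8:
  fixes f phi psi :: "real^'n \<Rightarrow> real" and gradf :: "real^'n \<Rightarrow> real^'n"
    and u :: "real^'n \<Rightarrow> real" and d :: "real^'n \<Rightarrow> real^'n"
    and Gs :: "real^'n \<Rightarrow> real^'n \<Rightarrow> ereal"
    and S :: "nat \<Rightarrow> (real^'n) set" and m :: nat and \<delta> :: ereal and \<kappa> :: real
    and T :: "real^'n \<Rightarrow> real \<Rightarrow> real^'n"
    and \<eta> \<eta>1 \<eta>2 r1 r2 \<Delta>max \<gamma>1 \<gamma>2 :: real
    and \<epsilon> :: "nat \<Rightarrow> real" and ell :: "real \<Rightarrow> real"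
    and x :: "nat \<Rightarrow> real^'n" and \<Delta> :: "nat \<Rightarrow> real" and c :: "nat \<Rightarrow> nat \<Rightarrow> nat"
    and B :: "nat \<Rightarrow> real^'n^'n"
    and g sC s sf xt :: "nat \<Rightarrow> real^'n"
    and aC \<alpha>0 \<alpha> \<rho>1 \<rho>2 :: "nat \<Rightarrow> real"
    and R \<kappa>B :: real
  \<comment> \<open>problem data\<close>
  assumes f_C1: "\<forall>y. (f has_derivative (\<lambda>h. gradf y \<bullet> h)) (at y)" "continuous_on UNIV gradf"
    and phi_convex: "convex_on UNIV phi"
    and psi_def: "psi = (\<lambda>y. f y + phi y)"
  \<comment> \<open>pseudo-gradient g(y) = u(y) d(y)\<close>
    and pg_nonstat: "\<forall>y. \<not> stationary gradf phi y \<longrightarrow>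
          norm (d y) = 1 \<and> dir_deriv psi y (d y) < 0 \<and> dir_deriv psi y (d y) \<le> u y \<and> u y < 0"
    and pg_stat: "\<forall>y. stationary gradf phi y \<longrightarrow> d y = 0 \<and> u y = 0"
  \<comment> \<open>stepsize safeguard with values in (0,\<infinity>]\<close>
    and Gs_pos: "\<forall>y e. norm e = 1 \<longrightarrow> 0 < Gs y e"
  \<comment> \<open>psi can be truncated\<close>
    and trunc: "can_truncate (Gamma_pt psi) S m \<delta> \<kappa> T"
  \<comment> \<open>algorithm parameters\<close>
    and params: "0 < \<eta>" "\<eta> < \<eta>1" "\<eta>1 < \<eta>2" "\<eta>2 < 1" "0 < r1" "r1 < 1" "1 < r2"
       "0 < \<Delta>max" "0 < \<gamma>1" "0 < \<gamma>2"
    and eps_seq: "\<forall>i. 0 < \<epsilon> i" "\<forall>i. \<epsilon> (Suc i) < \<epsilon> i" "summable \<epsilon>" "\<forall>i. ereal (\<epsilon> i) \<le> \<delta>"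
    and ell_ass: "\<forall>t>0. 0 \<le> ell t \<and> ell t \<le> 1/2" "\<forall>a b. 0 < a \<longrightarrow> a \<le> b \<longrightarrow> ell b \<le> ell a"
       "(ell \<longlongrightarrow> 0) (at_right 0)"
  \<comment> \<open>initialization\<close>
    and init: "0 < \<Delta> 0" "c 0 = (\<lambda>i. 0)"
  \<comment> \<open>the algorithm does not terminate\<close>
    and g_def: "\<forall>k. g k = u (x k) *\<^sub>R d (x k)"
    and nonterm: "\<forall>k. g k \<noteq> 0"
  \<comment> \<open>Cauchy point\<close>
    and cauchy: "\<forall>k. 0 \<le> aC k \<and> aC k \<le> \<Delta> k / norm (g k) \<and>
          (\<forall>t. 0 \<le> t \<and> t \<le> \<Delta> k / norm (g k) \<longrightarrow>
             tr_model (psi (x k)) (g k) (B k) (- (aC k *\<^sub>R g k))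
               \<le> tr_model (psi (x k)) (g k) (B k) (- (t *\<^sub>R g k)))"
    and sC_def: "\<forall>k. sC k = - (aC k *\<^sub>R g k)"
  \<comment> \<open>trial step\<close>
    and step: "\<forall>k. norm (s k) \<le> \<Delta> k \<and>
          tr_model (psi (x k)) (g k) (B k) 0 - tr_model (psi (x k)) (g k) (B k) (s k)
            \<ge> \<gamma>1 / 2 * norm (g k) * min (\<Delta> k) (\<gamma>2 * norm (g k)) \<and>
          tr_model (psi (x k)) (g k) (B k) 0 - tr_model (psi (x k)) (g k) (B k) (s k)
            \<ge> (1 - ell (norm (s k))) *
              (tr_model (psi (x k)) (g k) (B k) 0 - tr_model (psi (x k)) (g k) (B k) (sC k))"
    and rho1_def: "\<forall>k. \<rho>1 k = (psi (x k) - psi (x k + s k)) /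
          (tr_model (psi (x k)) (g k) (B k) 0 - tr_model (psi (x k)) (g k) (B k) (s k))"
  \<comment> \<open>stepsize computation (sf k, \<alpha> k are the final s^k, \<alpha>_k of this computation)\<close>
    and alpha0_def: "\<forall>k. \<alpha>0 k = real_of_ereal (min (Gs (x k) (sgn (s k))) (ereal (norm (s k))))"
    and sf_def: "\<forall>k. sf k = (if tr_model (psi (x k)) (g k) (B k) 0
                                 - tr_model (psi (x k)) (g k) (B k) (\<alpha>0 k *\<^sub>R sgn (s k))
                               < \<alpha>0 k / (2 * norm (s k)) *
                                 (tr_model (psi (x k)) (g k) (B k) 0
                                   - tr_model (psi (x k)) (g k) (B k) (s k))
                            then sC k else s k)"
    and alpha_def: "\<forall>k. \<alpha> k = real_of_ereal (min (Gs (x k) (sgn (sf k))) (ereal (norm (sf k))))"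
    and rho2_def: "\<forall>k. \<rho>2 k = (psi (x k) - psi (x k + \<alpha> k *\<^sub>R sgn (sf k))) /
          (tr_model (psi (x k)) (g k) (B k) 0
            - tr_model (psi (x k)) (g k) (B k) (\<alpha> k *\<^sub>R sgn (sf k)))"
  \<comment> \<open>updates\<close>
    and upd_succ: "\<forall>k. \<rho>1 k \<ge> \<eta>1 \<longrightarrow> xt k = x k + s k \<and>
          \<Delta> (Suc k) = (if \<rho>1 k > \<eta>2 then min \<Delta>max (r2 * \<Delta> k) else \<Delta> k)"
    and upd_fail: "\<forall>k. \<rho>1 k < \<eta>1 \<longrightarrow>
          \<Delta> (Suc k) = (if \<rho>2 k < \<eta>1 then r1 * \<Delta> k
                        else if \<rho>2 k > \<eta>2 then min \<Delta>max (r2 * \<Delta> k) else \<Delta> k) \<and>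
          xt k = (if \<rho>2 k \<ge> \<eta> then x k + \<alpha> k *\<^sub>R sgn (sf k) else x k)"
  \<comment> \<open>truncation step\<close>
    and trunc_step: "\<forall>k. trunc_loop (Gamma_pt psi) S m \<epsilon> T (xt k) (c k) (x (Suc k)) (c (Suc k))"
  \<comment> \<open>(A.1)\<close>
    and A1: "bdd_below (range psi)"
  \<comment> \<open>(B.1)\<close>
    and B1: "0 < R" "\<forall>k. x k \<in> ball 0 R"
  \<comment> \<open>(B.2)\<close>
    and B2: "0 < \<kappa>B" "\<forall>k. norm (B k) \<le> \<kappa>B"
  \<comment> \<open>(B.3)\<close>
    and B3: "\<forall>r::nat \<Rightarrow> nat. strict_mono r \<and> convergent (\<lambda>l. x (r l)) \<and> (\<lambda>l. \<alpha> (r l)) \<longlonglongrightarrow> 0 \<longrightarrow>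
          (\<lambda>l. psi (x (r l) + \<alpha> (r l) *\<^sub>R sgn (sf (r l))) - psi (x (r l))
                 - \<alpha> (r l) * dir_deriv psi (x (r l)) (sgn (sf (r l))))
            \<in> o(\<lambda>l. \<alpha> (r l))"
  \<comment> \<open>(B.4)\<close>
    and B4: "\<forall>e>0. \<exists>e'>0. \<forall>k. ereal e \<le> Gamma_pt psi (x k) \<longrightarrow> ereal e' \<le> Gs (x k) (sgn (sf k))"
  shows "liminf (\<lambda>k. ereal (norm (g k))) = 0"
proof -
  interpret A: algo f phi psi gradf u d Gs S m \<delta> \<kappa> T \<eta> \<eta>1 \<eta>2 r1 r2 \<Delta>max \<gamma>1 \<gamma>2 \<epsilon> ell x \<Delta> c B g sC s sf xt aC \<alpha>0 \<alpha> \<rho>1 \<rho>2 R \<kappa>B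
    by (unfold_locales) (rule assms)+
  show ?thesis by (rule A.main)
qed


end
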